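(* Let $\varphi:\Lambda\to\Gamma$ be a regular covering map of finite simplicial graphs without isolated vertices. Then the sequences $$1\to\mathrm{FD}(\varphi)\to\mathrm{FAut}(\varphi)\to\mathrm{LAut}(\varphi)\to1$$ and $$1\to\mathrm{Deck}(\varphi)\to\mathrm{FAut}(\varphi)/(\mathrm{FAut}(\varphi)\cap\mathrm{IA}(A_\Lambda))\to\mathrm{LAut}(\varphi)/(\mathrm{LAut}(\varphi)\cap\mathrm{IA}(A_\Gamma))\to1$$ are exact, where the map $\mathrm{FAut}(\varphi)\to\mathrm{LAut}(\varphi)$ sends a lift $F$ to the automorphism $f$ it lifts, the second sequence has the maps induced by inclusion of $\mathrm{Deck}(\varphi)$ and by $F\mapsto f$.
   Context: Graphs are finite simplicial graphs; $A_\Gamma$ is the right-angled Artin group with generators $V\Gamma$ and relations $[u,v]=1$ for edges $\{u,v\}$. A covering map of graphs $\varphi:\Lambda\to\Gamma$ is a surjective simplicial map that maps the neighbours of each vertex $u$ bijectively onto the neighbours of $\varphi(u)$; $\mathrm{Deck}(\varphi)$ is the group of graph automorphisms $\mu$ of $\Lambda$ with $\varphi\mu=\varphi$, regarded as a subgroup of $\mathrm{Aut}(A_\Lambda)$; $\varphi$ is regular if $\mathrm{Deck}(\varphi)$ acts transitively on each fiber. Let $\phi:A_\Lambda\to A_\Gamma$ be induced by $\varphi$. $f\in\mathrm{Aut}(A_\Gamma)$ is liftable if there is $F\in\mathrm{Aut}(A_\Lambda)$ (a lift) with $f\circ\phi=\phi\circ F$ (since $\phi$ is surjective, $F$ determines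 $f$). $\mathrm{LAut}(\varphi)$ is the group of liftable automorphisms, $\mathrm{FAut}(\varphi)\le\mathrm{Aut}(A_\Lambda)$ the group of all lifts of liftable automorphisms, and $\mathrm{FD}(\varphi)$ the group of lifts of the identity. $\mathrm{IA}(A)$ denotes the kernel of the action of $\mathrm{Aut}(A)$ on $H_1(A)$. *)

theory Defs
  imports "HOL-Algebra.Algebra"
begin

definition simple_graph :: "'v set \<Rightarrow> ('v \<Rightarrow> 'v \<Rightarrow> bool) \<Rightarrow> bool" where
  "simple_graph V E \<longleftrightarrow> finite V \<and> (\<forall>u v. E u v \<longrightarrow> u \<in> V \<and> v \<in> V \<and> u \<noteq> v \<and> E v u)"

definition no_isolated_vertices :: "'v set \<Rightarrow> ('v \<Rightarrow> 'v \<Rightarrow> bool) \<Rightarrow> bool" where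
  "no_isolated_vertices V E \<longleftrightarrow> (\<forall>v\<in>V. \<exists>u. E v u)"

definition neighbours :: "('v \<Rightarrow> 'v \<Rightarrow> bool) \<Rightarrow> 'v \<Rightarrow> 'v set" where
  "neighbours E u = {x. E u x}"

definition covering_map ::
  "'w set \<Rightarrow> ('w \<Rightarrow> 'w \<Rightarrow> bool) \<Rightarrow> 'v set \<Rightarrow> ('v \<Rightarrow> 'v \<Rightarrow> bool) \<Rightarrow> ('w \<Rightarrow> 'v) \<Rightarrow> bool" where
  "covering_map VL EL VG EG \<phi> \<longleftrightarrow>
     \<phi> ` VL = VG \<and>
     (\<forall>u v. EL u v \<longrightarrow> EG (\<phi> u) (\<phi> v)) \<and>
     (\<forall>u\<in>VL. bij_betw \<phi> (neighbours EL u) (neighbours EG (\<phi> u)))"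

definition graph_aut :: "'w set \<Rightarrow> ('w \<Rightarrow> 'w \<Rightarrow> bool) \<Rightarrow> ('w \<Rightarrow> 'w) \<Rightarrow> bool" where
  "graph_aut V E \<mu> \<longleftrightarrow> bij_betw \<mu> V V \<and> (\<forall>u\<in>V. \<forall>v\<in>V. E (\<mu> u) (\<mu> v) \<longleftrightarrow> E u v)"

definition deck_graph ::
  "'w set \<Rightarrow> ('w \<Rightarrow> 'w \<Rightarrow> bool) \<Rightarrow> ('w \<Rightarrow> 'v) \<Rightarrow> ('w \<Rightarrow> 'w) set" where
  "deck_graph VL EL \<phi> = {\<mu>. graph_aut VL EL \<mu> \<and> (\<forall>u\<in>VL. \<phi> (\<mu> u) = \<phi> u)}"

definition regular_covering ::
  "'w set \<Rightarrow> ('w \<Rightarrow> 'w \<Rightarrow> bool) \<Rightarrow> 'v set \<Rightarrow> ('v \<Rightarrow> 'v \<Rightarrow> bool) \<Rightarrow> ('w \<Rightarrow> 'v) \<Rightarrow> bool" where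
  "regular_covering VL EL VG EG \<phi> \<longleftrightarrow> covering_map VL EL VG EG \<phi> \<and>
     (\<forall>u\<in>VL. \<forall>u'\<in>VL. \<phi> u = \<phi> u' \<longrightarrow> (\<exists>\<mu>\<in>deck_graph VL EL \<phi>. \<mu> u = u'))"

text \<open>Words are lists of letters (v, True) = v and (v, False) = v^-1.\<close>

definition raag_words :: "'v set \<Rightarrow> ('v \<times> bool) list set" where
  "raag_words V = {w. set w \<subseteq> V \<times> UNIV}"

definition raag_step ::
  "'v set \<Rightarrow> ('v \<Rightarrow> 'v \<Rightarrow> bool) \<Rightarrow> ('v \<times> bool) list \<Rightarrow> ('v \<times> bool) list \<Rightarrow> bool" where
  "raag_step V E x y \<longleftrightarrow> x \<in> raag_words V \<and> y \<in> raag_words V \<and>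
     ((\<exists>a b v c. x = a @ [(v, c), (v, \<not> c)] @ b \<and> y = a @ b) \<or>
      (\<exists>a b u v c d. E u v \<and> x = a @ [(u, c), (v, d)] @ b \<and> y = a @ [(v, d), (u, c)] @ b))"

definition raag_rel :: "'v set \<Rightarrow> ('v \<Rightarrow> 'v \<Rightarrow> bool) \<Rightarrow> (('v \<times> bool) list \<times> ('v \<times> bool) list) set" where
  "raag_rel V E = {(x, y). x \<in> raag_words V \<and> y \<in> raag_words V \<and> equivclp (raag_step V E) x y}"

definition raag :: "'v set \<Rightarrow> ('v \<Rightarrow> 'v \<Rightarrow> bool) \<Rightarrow> ('v \<times> bool) list set monoid" where
  "raag V E = \<lparr> carrier = (raag_words V // raag_rel V E),
                monoid.mult = (\<lambda>P Q. (\<Union>x\<in>P. (\<Union>y\<in>Q. raag_rel V E `` {x @ y}))),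
                one = (raag_rel V E `` {[]}) \<rparr>"

definition raag_hom ::
  "'w set \<Rightarrow> ('w \<Rightarrow> 'w \<Rightarrow> bool) \<Rightarrow> 'v set \<Rightarrow> ('v \<Rightarrow> 'v \<Rightarrow> bool) \<Rightarrow> ('w \<Rightarrow> 'v)
     \<Rightarrow> ('w \<times> bool) list set \<Rightarrow> ('v \<times> bool) list set" where
  "raag_hom VL EL VG EG h =
     (\<lambda>S \<in> carrier (raag VL EL). \<Union>x\<in>S. raag_rel VG EG `` {map (\<lambda>(v, b). (h v, b)) x})"

text \<open>IA(A): automorphisms acting trivially on H_1(A) = A / [A,A].\<close>

definition IA :: "('a, 'b) monoid_scheme \<Rightarrow> ('a \<Rightarrow> 'a) set" where
  "IA G = {f \<in> auto G. \<forall>x\<in>carrier G. f x \<otimes>\<^bsub>G\<^esub> inv\<^bsub>G\<^esub> x \<in> derived G (carrier G)}"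

definition is_lift where
  "is_lift VL EL VG EG \<phi> f F \<longleftrightarrow>
     (\<forall>x\<in>carrier (raag VL EL). f (raag_hom VL EL VG EG \<phi> x) = raag_hom VL EL VG EG \<phi> (F x))"

definition LAut where
  "LAut VL EL VG EG \<phi> = {f \<in> auto (raag VG EG). \<exists>F\<in>auto (raag VL EL). is_lift VL EL VG EG \<phi> f F}"

definition FAut where
  "FAut VL EL VG EG \<phi> = {F \<in> auto (raag VL EL). \<exists>f\<in>auto (raag VG EG). is_lift VL EL VG EG \<phi> f F}"

definition FD where
  "FD VL EL VG EG \<phi> = {F \<in> auto (raag VL EL). is_lift VL EL VG EG \<phi> (\<lambda>x\<in>carrier (raag VG EG). x) F}"

definition lifted_aut where
  "lifted_aut VL EL VG EG \<phi> F = (THE f. f \<in> auto (raag VG EG) \<and> is_lift VL EL VG EG \<phi> f F)"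

definition Deck where
  "Deck VL EL \<phi> = {raag_hom VL EL VL EL \<mu> | \<mu>. \<mu> \<in> deck_graph VL EL \<phi>}"

end

theory Submission
  imports Defs "HOL-Library.Function_Algebras"
begin

lemma equivclp_inv_fun:
  assumes "\<And>x y. r x y \<Longrightarrow> g x = g y" and "equivclp r x y"
  shows "g x = g y"
  using assms(2) by (induction rule: equivclp_induct) (auto dest: assms(1))

lemma equivclp_map_fun:
  assumes "\<And>x y. r x y \<Longrightarrow> equivclp s (f x) (f y)" and "equivclp r x y"
  shows "equivclp s (f x) (f y)"
  using assms(2)
proof (induction rule: equivclp_induct)
  case base then show ?case by simp
next
  case (step y z)
  then show ?case
    by (meson assms(1) equivclp_sym equivclp_trans)
qed

lemma raag_words_append[simp]: "x @ y \<in> raag_words V \<longleftrightarrow> x \<in> raag_words V \<and> y \<in> raag_words V"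
  by (auto simp: raag_words_def)

lemma raag_words_Cons[simp]: "l # y \<in> raag_words V \<longleftrightarrow> fst l \<in> V \<and> y \<in> raag_words V"
  by (cases l) (auto simp: raag_words_def)

lemma raag_words_Nil[simp]: "[] \<in> raag_words V"
  by (auto simp: raag_words_def)

lemma raag_step_words: "raag_step V E x y \<Longrightarrow> x \<in> raag_words V \<and> y \<in> raag_words V"
  by (simp add: raag_step_def)

lemma equivclp_step_words:
  assumes "equivclp (raag_step V E) x y" "x \<in> raag_words V"
  shows "y \<in> raag_words V"
  using assms by (induction rule: equivclp_induct) (auto dest: raag_step_words)

lemma raag_rel_iff: "(x, y) \<in> raag_rel V E \<longleftrightarrow> x \<in> raag_words V \<and> y \<in> raag_words V \<and> equivclp (raag_step V E) x y"
  by (simp add: raag_rel_def)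

lemma equiv_raag_rel: "equiv (raag_words V) (raag_rel V E)"
proof (rule equivI)
  show "raag_rel V E \<subseteq> raag_words V \<times> raag_words V" by (auto simp: raag_rel_def)
  show "refl_on (raag_words V) (raag_rel V E)"
    unfolding refl_on_def by (auto simp: raag_rel_def)
  show "sym (raag_rel V E)"
    unfolding sym_def raag_rel_iff by (blast intro: equivclp_sym)
  show "trans (raag_rel V E)"
    unfolding trans_def raag_rel_iff by (blast intro: equivclp_trans)
qed

lemma raag_stepI1:
  "a @ [(v, c), (v, \<not> c)] @ b \<in> raag_words V \<Longrightarrow> a @ b \<in> raag_words V \<Longrightarrow>
   raag_step V E (a @ [(v, c), (v, \<not> c)] @ b) (a @ b)"
  unfolding raag_step_def by blast

lemma raag_stepI2:
  "E u v \<Longrightarrow> a @ [(u, c), (v, d)] @ b \<in> raag_words V \<Longrightarrow> a @ [(v, d), (u, c)] @ b \<in> raag_words V \<Longrightarrow>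
   raag_step V E (a @ [(u, c), (v, d)] @ b) (a @ [(v, d), (u, c)] @ b)"
  unfolding raag_step_def by blast

lemma raag_stepE:
  assumes "raag_step V E x y"
  obtains (cancel) a b v c where "x = a @ [(v, c), (v, \<not> c)] @ b" "y = a @ b"
    | (comm) a b u v c d where "E u v" "x = a @ [(u, c), (v, d)] @ b" "y = a @ [(v, d), (u, c)] @ b"
  using assms unfolding raag_step_def by blast

lemma raag_step_append_right:
  assumes "raag_step V E x y" "z \<in> raag_words V"
  shows "raag_step V E (x @ z) (y @ z)"
  using assms(1)
proof (cases rule: raag_stepE)
  case (cancel a b v c)
  have w: "x \<in> raag_words V" "y \<in> raag_words V" using assms(1) by (simp_all add: raag_step_def)
  show ?thesis using raag_stepI1[of a v c "b @ z" V E] w assms(2) cancel by simp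
next
  case (comm a b u v c d)
  have w: "x \<in> raag_words V" "y \<in> raag_words V" using assms(1) by (simp_all add: raag_step_def)
  show ?thesis using raag_stepI2[of E u v a c d "b @ z" V] w assms(2) comm by simp
qed

lemma raag_step_append_left:
  assumes "raag_step V E x y" "z \<in> raag_words V"
  shows "raag_step V E (z @ x) (z @ y)"
  using assms(1)
proof (cases rule: raag_stepE)
  case (cancel a b v c)
  have w: "x \<in> raag_words V" "y \<in> raag_words V" using assms(1) by (simp_all add: raag_step_def)
  show ?thesis using raag_stepI1[of "z @ a" v c b V E] w assms(2) cancel by simp
next
  case (comm a b u v c d)
  have w: "x \<in> raag_words V" "y \<in> raag_words V" using assms(1) by (simp_all add: raag_step_def)
  show ?thesis using raag_stepI2[of E u v "z @ a" c d b V] w assms(2) comm by simp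
qed

lemma raag_rel_append:
  assumes "(x, x') \<in> raag_rel V E" "(y, y') \<in> raag_rel V E"
  shows "(x @ y, x' @ y') \<in> raag_rel V E"
proof -
  have wx: "x \<in> raag_words V" "x' \<in> raag_words V" and wy: "y \<in> raag_words V" "y' \<in> raag_words V"
    and ex: "equivclp (raag_step V E) x x'" and ey: "equivclp (raag_step V E) y y'"
    using assms by (auto simp: raag_rel_iff)
  have 1: "equivclp (raag_step V E) (x @ y) (x' @ y)"
  proof (rule equivclp_map_fun[where f="\<lambda>t. t @ y", OF _ ex])
    fix s t assume "raag_step V E s t"
    then have "raag_step V E (s @ y) (t @ y)" by (rule raag_step_append_right[OF _ wy(1)])
    then show "equivclp (raag_step V E) (s @ y) (t @ y)" by (rule r_into_equivclp)
  qed
  have 2: "equivclp (raag_step V E) (x' @ y) (x' @ y')"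
  proof (rule equivclp_map_fun[where f="\<lambda>t. x' @ t", OF _ ey])
    fix s t assume "raag_step V E s t"
    then have "raag_step V E (x' @ s) (x' @ t)" by (rule raag_step_append_left[OF _ wx(2)])
    then show "equivclp (raag_step V E) (x' @ s) (x' @ t)" by (rule r_into_equivclp)
  qed
  have "equivclp (raag_step V E) (x @ y) (x' @ y')" using 1 2 by (rule equivclp_trans)
  then show ?thesis using wx wy by (simp add: raag_rel_iff)
qed

definition cls :: "'v set \<Rightarrow> ('v \<Rightarrow> 'v \<Rightarrow> bool) \<Rightarrow> ('v \<times> bool) list \<Rightarrow> ('v \<times> bool) list set" where
  "cls V E x = raag_rel V E `` {x}"

definition winv :: "('v \<times> bool) list \<Rightarrow> ('v \<times> bool) list" where
  "winv x = rev (map (\<lambda>(v, b). (v, \<not> b)) x)"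

lemma winv_words[simp]: "winv x \<in> raag_words V \<longleftrightarrow> x \<in> raag_words V"
  by (auto simp: winv_def raag_words_def)

lemma winv_Cons: "winv (l # x) = winv x @ [(fst l, \<not> snd l)]"
  by (cases l) (simp add: winv_def)

lemma raag_rel_refl: "x \<in> raag_words V \<Longrightarrow> (x, x) \<in> raag_rel V E"
  by (simp add: raag_rel_iff)

lemma raag_rel_step: "raag_step V E x y \<Longrightarrow> (x, y) \<in> raag_rel V E"
  by (auto simp: raag_rel_iff dest: raag_step_words)

lemma raag_rel_sym: "(x, y) \<in> raag_rel V E \<Longrightarrow> (y, x) \<in> raag_rel V E"
  by (auto simp: raag_rel_iff intro: equivclp_sym)

lemma raag_rel_trans: "(x, y) \<in> raag_rel V E \<Longrightarrow> (y, z) \<in> raag_rel V E \<Longrightarrow> (x, z) \<in> raag_rel V E"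
  by (auto simp: raag_rel_iff intro: equivclp_trans)

lemma winv_right: "x \<in> raag_words V \<Longrightarrow> (x @ winv x, []) \<in> raag_rel V E"
proof (induction x)
  case Nil then show ?case by (simp add: winv_def raag_rel_refl)
next
  case (Cons l x)
  obtain v c where l: "l = (v, c)" by (cases l)
  have v: "v \<in> V" and xw: "x \<in> raag_words V" using Cons.prems l by auto
  have "([l] @ (x @ winv x) @ [(v, \<not> c)], [l] @ [] @ [(v, \<not> c)]) \<in> raag_rel V E"
    by (intro raag_rel_append Cons.IH xw raag_rel_refl) (auto simp: l v)
  moreover have "([] @ [(v, c), (v, \<not> c)] @ [], []) \<in> raag_rel V E"
    using raag_stepI1[of "[]" v c "[]" V E] v by (intro raag_rel_step) simp
  ultimately show ?case by (auto simp: l winv_Cons intro: raag_rel_trans)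
qed

lemma winv_winv[simp]: "winv (winv x) = x"
  by (induction x) (auto simp: winv_def)

lemma winv_left: "x \<in> raag_words V \<Longrightarrow> (winv x @ x, []) \<in> raag_rel V E"
  using winv_right[of "winv x" V E] by simp

lemma cls_mem: "x \<in> raag_words V \<Longrightarrow> cls V E x \<in> carrier (raag V E)"
  by (auto simp: raag_def cls_def quotient_def)

lemma carrier_raagE:
  assumes "P \<in> carrier (raag V E)"
  obtains x where "x \<in> raag_words V" "P = cls V E x"
  using assms by (auto simp: raag_def cls_def quotient_def)

lemma cls_eq_iff:
  assumes "x \<in> raag_words V" "y \<in> raag_words V"
  shows "cls V E x = cls V E y \<longleftrightarrow> (x, y) \<in> raag_rel V E"
  unfolding cls_def using equiv_class_eq_iff[OF equiv_raag_rel] assms by auto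

lemma in_cls_iff: "y \<in> cls V E x \<longleftrightarrow> (x, y) \<in> raag_rel V E"
  by (simp add: cls_def)

lemma raag_mult_cls:
  assumes "x \<in> raag_words V" "y \<in> raag_words V"
  shows "cls V E x \<otimes>\<^bsub>raag V E\<^esub> cls V E y = cls V E (x @ y)"
proof -
  have "(\<Union>x'\<in>cls V E x. \<Union>y'\<in>cls V E y. raag_rel V E `` {x' @ y'}) = cls V E (x @ y)"
  proof (intro equalityI subsetI)
    fix z assume "z \<in> (\<Union>x'\<in>cls V E x. \<Union>y'\<in>cls V E y. raag_rel V E `` {x' @ y'})"
    then obtain x' y' where "(x, x') \<in> raag_rel V E" "(y, y') \<in> raag_rel V E" "(x' @ y', z) \<in> raag_rel V E"
      by (auto simp: cls_def)
    then show "z \<in> cls V E (x @ y)"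
      by (auto simp: cls_def intro: raag_rel_trans raag_rel_append)
  next
    fix z assume "z \<in> cls V E (x @ y)"
    then have "(x @ y, z) \<in> raag_rel V E" by (simp add: cls_def)
    moreover have "x \<in> cls V E x" "y \<in> cls V E y" using assms by (auto simp: cls_def raag_rel_refl)
    ultimately show "z \<in> (\<Union>x'\<in>cls V E x. \<Union>y'\<in>cls V E y. raag_rel V E `` {x' @ y'})"
      by blast
  qed
  then show ?thesis by (simp add: raag_def)
qed

lemma raag_one: "\<one>\<^bsub>raag V E\<^esub> = cls V E []"
  by (simp add: raag_def cls_def)

lemma raag_group: "group (raag V E)"
proof (rule groupI)
  fix P Q assume "P \<in> carrier (raag V E)" "Q \<in> carrier (raag V E)"
  then show "P \<otimes>\<^bsub>raag V E\<^esub> Q \<in> carrier (raag V E)"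
    by (elim carrier_raagE) (simp add: raag_mult_cls cls_mem)
next
  show "\<one>\<^bsub>raag V E\<^esub> \<in> carrier (raag V E)" by (simp add: raag_one cls_mem)
next
  fix P Q S assume "P \<in> carrier (raag V E)" "Q \<in> carrier (raag V E)" "S \<in> carrier (raag V E)"
  then show "P \<otimes>\<^bsub>raag V E\<^esub> Q \<otimes>\<^bsub>raag V E\<^esub> S = P \<otimes>\<^bsub>raag V E\<^esub> (Q \<otimes>\<^bsub>raag V E\<^esub> S)"
    by (elim carrier_raagE) (simp add: raag_mult_cls)
next
  fix P assume "P \<in> carrier (raag V E)"
  then show "\<one>\<^bsub>raag V E\<^esub> \<otimes>\<^bsub>raag V E\<^esub> P = P"
    by (elim carrier_raagE) (simp add: raag_mult_cls raag_one)
next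
  fix P assume "P \<in> carrier (raag V E)"
  then obtain x where x: "x \<in> raag_words V" "P = cls V E x" by (elim carrier_raagE)
  show "\<exists>Q\<in>carrier (raag V E). Q \<otimes>\<^bsub>raag V E\<^esub> P = \<one>\<^bsub>raag V E\<^esub>"
    using x winv_left[of x V E]
    by (intro bexI[of _ "cls V E (winv x)"]) (auto simp: raag_mult_cls raag_one cls_eq_iff cls_mem)
qed

lemma raag_inv_cls:
  assumes "x \<in> raag_words V"
  shows "inv\<^bsub>raag V E\<^esub> (cls V E x) = cls V E (winv x)"
proof -
  interpret group "raag V E" by (rule raag_group)
  show ?thesis
    using assms winv_left[of x V E]
    by (intro inv_equality) (auto simp: raag_mult_cls raag_one cls_eq_iff cls_mem)
qed


definition mapw :: "('a \<Rightarrow> 'b) \<Rightarrow> ('a \<times> bool) list \<Rightarrow> ('b \<times> bool) list" where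
  "mapw h x = map (\<lambda>(v, b). (h v, b)) x"

lemma mapw_simps[simp]: "mapw h [] = []" "mapw h ((v, b) # x) = (h v, b) # mapw h x"
  "mapw h (x @ y) = mapw h x @ mapw h y"
  by (simp_all add: mapw_def)

lemma mapw_words: "h ` V \<subseteq> V' \<Longrightarrow> x \<in> raag_words V \<Longrightarrow> mapw h x \<in> raag_words V'"
  by (auto simp: mapw_def raag_words_def)

lemma mapw_comp: "mapw g (mapw h x) = mapw (g \<circ> h) x"
  by (induction x) (auto simp: mapw_def)

lemma mapw_cong: "x \<in> raag_words V \<Longrightarrow> (\<And>v. v \<in> V \<Longrightarrow> h v = h' v) \<Longrightarrow> mapw h x = mapw h' x"
  by (induction x) (auto simp: mapw_def raag_words_def)

definition simp_map where
  "simp_map V E V' E' h \<longleftrightarrow> h ` V \<subseteq> V' \<and> (\<forall>u v. E u v \<longrightarrow> E' (h u) (h v))"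

lemma raag_step_map:
  assumes sm: "simp_map V E V' E' h" and st: "raag_step V E x y"
  shows "raag_step V' E' (mapw h x) (mapw h y)"
proof -
  have w: "mapw h x \<in> raag_words V'" "mapw h y \<in> raag_words V'"
    using st sm by (auto simp: raag_step_def simp_map_def intro: mapw_words)
  from st show ?thesis
  proof (cases rule: raag_stepE)
    case (cancel a b v c)
    then show ?thesis using raag_stepI1[of "mapw h a" "h v" c "mapw h b" V' E'] w by simp
  next
    case (comm a b u v c d)
    have "E' (h u) (h v)" using comm(1) sm by (simp add: simp_map_def)
    then show ?thesis using raag_stepI2[of E' "h u" "h v" "mapw h a" c d "mapw h b" V'] w comm by simp
  qed
qed

lemma raag_rel_map:
  assumes sm: "simp_map V E V' E' h" and r: "(x, y) \<in> raag_rel V E"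
  shows "(mapw h x, mapw h y) \<in> raag_rel V' E'"
proof -
  have w: "x \<in> raag_words V" "y \<in> raag_words V" and e: "equivclp (raag_step V E) x y"
    using r by (auto simp: raag_rel_iff)
  have "equivclp (raag_step V' E') (mapw h x) (mapw h y)"
  proof (rule equivclp_map_fun[where f="mapw h", OF _ e])
    fix s t assume "raag_step V E s t"
    then show "equivclp (raag_step V' E') (mapw h s) (mapw h t)"
      by (intro r_into_equivclp raag_step_map[OF sm])
  qed
  then show ?thesis using w sm by (auto simp: raag_rel_iff simp_map_def intro: mapw_words)
qed

lemma raag_hom_cls:
  assumes sm: "simp_map V E V' E' h" and x: "x \<in> raag_words V"
  shows "raag_hom V E V' E' h (cls V E x) = cls V' E' (mapw h x)"
proof -
  have "(\<Union>y\<in>cls V E x. raag_rel V' E' `` {map (\<lambda>(v, b). (h v, b)) y}) = cls V' E' (mapw h x)"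
  proof (intro equalityI subsetI)
    fix z assume "z \<in> (\<Union>y\<in>cls V E x. raag_rel V' E' `` {map (\<lambda>(v, b). (h v, b)) y})"
    then obtain y where y: "(x, y) \<in> raag_rel V E" "(mapw h y, z) \<in> raag_rel V' E'"
      by (auto simp: cls_def mapw_def)
    then show "z \<in> cls V' E' (mapw h x)"
      using raag_rel_map[OF sm y(1)] by (auto simp: cls_def intro: raag_rel_trans)
  next
    fix z assume "z \<in> cls V' E' (mapw h x)"
    moreover have "x \<in> cls V E x" using x by (simp add: cls_def raag_rel_refl)
    ultimately show "z \<in> (\<Union>y\<in>cls V E x. raag_rel V' E' `` {map (\<lambda>(v, b). (h v, b)) y})"
      by (auto simp: cls_def mapw_def)
  qed
  then show ?thesis using cls_mem[OF x, of E] by (simp add: raag_hom_def)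
qed

lemma raag_hom_mem:
  assumes sm: "simp_map V E V' E' h" and P: "P \<in> carrier (raag V E)"
  shows "raag_hom V E V' E' h P \<in> carrier (raag V' E')"
proof -
  from P obtain x where x: "x \<in> raag_words V" "P = cls V E x" by (elim carrier_raagE)
  have "mapw h x \<in> raag_words V'" using sm x by (auto simp: simp_map_def intro: mapw_words)
  then show ?thesis using x sm by (simp add: raag_hom_cls cls_mem)
qed

lemma raag_hom_hom:
  assumes sm: "simp_map V E V' E' h"
  shows "raag_hom V E V' E' h \<in> hom (raag V E) (raag V' E')"
proof (rule homI)
  fix P assume "P \<in> carrier (raag V E)"
  then show "raag_hom V E V' E' h P \<in> carrier (raag V' E')" by (rule raag_hom_mem[OF sm])
next
  fix P Q assume "P \<in> carrier (raag V E)" "Q \<in> carrier (raag V E)"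
  then obtain x y where "x \<in> raag_words V" "y \<in> raag_words V" "P = cls V E x" "Q = cls V E y"
    by (metis carrier_raagE)
  moreover have "mapw h x \<in> raag_words V'" "mapw h y \<in> raag_words V'"
    using sm \<open>x \<in> raag_words V\<close> \<open>y \<in> raag_words V\<close> by (auto simp: simp_map_def intro: mapw_words)
  ultimately show "raag_hom V E V' E' h (P \<otimes>\<^bsub>raag V E\<^esub> Q) =
      raag_hom V E V' E' h P \<otimes>\<^bsub>raag V' E'\<^esub> raag_hom V E V' E' h Q"
    using sm by (simp add: raag_mult_cls raag_hom_cls)
qed

lemma raag_hom_ext: "raag_hom V E V' E' h \<in> extensional (carrier (raag V E))"
  by (simp add: raag_hom_def)

lemma raag_hom_cong:
  assumes "\<And>v. v \<in> V \<Longrightarrow> h v = h' v"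
  shows "raag_hom V E V' E' h = raag_hom V E V' E' h'"
proof -
  have "raag_hom V E V' E' h P = raag_hom V E V' E' h' P" for P
  proof (cases "P \<in> carrier (raag V E)")
    case True
    then obtain x where x: "x \<in> raag_words V" "P = cls V E x" by (elim carrier_raagE)
    have meq: "map (\<lambda>(v, b). (h v, b)) y = map (\<lambda>(v, b). (h' v, b)) y" if "y \<in> P" for y
    proof -
      have "y \<in> raag_words V" using x that by (auto simp: cls_def raag_rel_iff)
      then show ?thesis using mapw_cong[of y V h h'] assms by (simp add: mapw_def)
    qed
    have "(\<Union>y\<in>P. raag_rel V' E' `` {map (\<lambda>(v, b). (h v, b)) y}) =
          (\<Union>y\<in>P. raag_rel V' E' `` {map (\<lambda>(v, b). (h' v, b)) y})"
    proof (rule SUP_cong[OF refl])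
      fix y assume "y \<in> P"
      then show "raag_rel V' E' `` {map (\<lambda>(v, b). (h v, b)) y} = raag_rel V' E' `` {map (\<lambda>(v, b). (h' v, b)) y}"
        by (simp only: meq)
    qed
    then show ?thesis using True by (simp add: raag_hom_def)
  next
    case False
    then show ?thesis by (simp add: raag_hom_def)
  qed
  then show ?thesis by blast
qed

lemma raag_hom_comp:
  assumes sm1: "simp_map V E V' E' h" and sm2: "simp_map V' E' V'' E'' g"
    and P: "P \<in> carrier (raag V E)"
  shows "raag_hom V' E' V'' E'' g (raag_hom V E V' E' h P) = raag_hom V E V'' E'' (g \<circ> h) P"
proof -
  have sm3: "simp_map V E V'' E'' (g \<circ> h)" using sm1 sm2 by (force simp: simp_map_def)
  from P obtain x where x: "x \<in> raag_words V" "P = cls V E x" by (elim carrier_raagE)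
  have "mapw h x \<in> raag_words V'" using sm1 x by (auto simp: simp_map_def intro: mapw_words)
  then show ?thesis using x sm1 sm2 sm3 by (simp add: raag_hom_cls mapw_comp)
qed

lemma simp_map_id: "simp_map V E V E (\<lambda>v. v)"
  by (simp add: simp_map_def)

lemma mapw_id[simp]: "mapw (\<lambda>v. v) x = x"
  by (induction x) (auto simp: mapw_def)

lemma raag_hom_id:
  assumes "\<And>v. v \<in> V \<Longrightarrow> h v = v"
  shows "raag_hom V E V E h = (\<lambda>P\<in>carrier (raag V E). P)"
proof -
  have "raag_hom V E V E h = raag_hom V E V E (\<lambda>v. v)" by (rule raag_hom_cong) (simp add: assms)
  moreover have "raag_hom V E V E (\<lambda>v. v) P = P" if "P \<in> carrier (raag V E)" for P
    using that by (elim carrier_raagE) (simp add: raag_hom_cls[OF simp_map_id])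
  ultimately show ?thesis using raag_hom_ext[of V E V E "\<lambda>v. v"]
    by (auto simp: extensional_def fun_eq_iff)
qed

section \<open>Exponent sums\<close>

fun ex :: "('a \<times> bool) list \<Rightarrow> 'a \<Rightarrow> int" where
  "ex [] = (\<lambda>_. 0)"
| "ex ((v, b) # w) = (\<lambda>u. (if u = v then (if b then 1 else -1) else 0) + ex w u)"

lemma ex_append: "ex (x @ y) u = ex x u + ex y u"
  by (induction x rule: ex.induct) auto

lemma ex_append_fun: "ex (x @ y) = ex x + ex y"
  by (simp add: fun_eq_iff ex_append)

lemma ex_winv: "ex (winv x) u = - ex x u"
  by (induction x rule: ex.induct) (auto simp: winv_def ex_append)

lemma ex_step: "raag_step V E x y \<Longrightarrow> ex x = ex y"
  by (elim raag_stepE) (auto simp: ex_append_fun fun_eq_iff)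

lemma ex_rel: "(x, y) \<in> raag_rel V E \<Longrightarrow> ex x = ex y"
  unfolding raag_rel_iff using equivclp_inv_fun[of "raag_step V E" ex x y] ex_step by blast

lemma ex_outside: "x \<in> raag_words V \<Longrightarrow> u \<notin> V \<Longrightarrow> ex x u = 0"
  by (induction x rule: ex.induct) auto

lemma ex_mapw:
  assumes "finite V" "x \<in> raag_words V"
  shows "ex (mapw h x) u = (\<Sum>v\<in>{v\<in>V. h v = u}. ex x v)"
  using assms(2)
proof (induction x rule: ex.induct)
  case 1 then show ?case by simp
next
  case (2 v b w)
  have v: "v \<in> V" and w: "w \<in> raag_words V" using "2.prems" by auto
  have "(\<Sum>v'\<in>{v'\<in>V. h v' = u}. ex ((v, b) # w) v') =
        (\<Sum>v'\<in>{v'\<in>V. h v' = u}. (if v' = v then (if b then 1 else -1) else 0)) + (\<Sum>v'\<in>{v'\<in>V. h v' = u}. ex w v')"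
    by (simp add: sum.distrib)
  also have "(\<Sum>v'\<in>{v'\<in>V. h v' = u}. (if v' = v then (if b then 1 else -1) else 0)) =
     (if h v = u then (if b then 1 else -1) else 0)"
    using assms(1) v by (simp add: sum.delta' )
  finally show ?case using "2.IH"[OF w] by simp
qed

definition exc :: "('a \<times> bool) list set \<Rightarrow> 'a \<Rightarrow> int" where
  "exc P = ex (SOME x. x \<in> P)"

lemma exc_cls: "x \<in> raag_words V \<Longrightarrow> exc (cls V E x) = ex x"
proof -
  assume x: "x \<in> raag_words V"
  have "x \<in> cls V E x" using x by (simp add: cls_def raag_rel_refl)
  then have "(SOME y. y \<in> cls V E x) \<in> cls V E x" by (rule someI)
  then show ?thesis by (auto simp: exc_def cls_def dest: ex_rel)
qed

lemma exc_mult: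
  assumes "P \<in> carrier (raag V E)" "Q \<in> carrier (raag V E)"
  shows "exc (P \<otimes>\<^bsub>raag V E\<^esub> Q) = exc P + exc Q"
  using assms by (elim carrier_raagE) (simp add: raag_mult_cls exc_cls ex_append_fun)

lemma exc_inv:
  assumes "P \<in> carrier (raag V E)"
  shows "exc (inv\<^bsub>raag V E\<^esub> P) = - exc P"
  using assms by (elim carrier_raagE) (simp add: raag_inv_cls exc_cls ex_winv fun_eq_iff)

lemma exc_one: "exc (\<one>\<^bsub>raag V E\<^esub>) = 0"
  by (simp add: raag_one exc_cls fun_eq_iff)

lemma exc_outside: "P \<in> carrier (raag V E) \<Longrightarrow> u \<notin> V \<Longrightarrow> exc P u = 0"
  by (elim carrier_raagE) (simp add: exc_cls ex_outside)


fun ct :: "'a \<Rightarrow> 'a \<Rightarrow> ('a \<times> bool) list \<Rightarrow> int" where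
  "ct p q [] = 0"
| "ct p q ((v, b) # w) = (if v = p then (if b then 1 else -1) * ex w q else 0) + ct p q w"

lemma ct_append: "ct p q (x @ y) = ct p q x + ct p q y + ex x p * ex y q"
  by (induction x rule: ex.induct) (auto simp: ex_append algebra_simps)

lemma ct_mid: "ex s = ex s' \<Longrightarrow> ct p q s = ct p q s' \<Longrightarrow> ct p q (a @ s @ b) = ct p q (a @ s' @ b)"
  by (simp add: ct_append ex_append_fun)

lemma ct_step:
  assumes "p \<noteq> q" "\<not> E p q" "\<not> E q p" "raag_step V E x y"
  shows "ct p q x = ct p q y"
  using assms(4)
proof (cases rule: raag_stepE)
  case (cancel a b v c)
  have "ex [(v, c), (v, \<not> c)] = ex []" by (auto simp: fun_eq_iff)
  moreover have "ct p q [(v, c), (v, \<not> c)] = ct p q []" using assms(1) by auto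
  ultimately show ?thesis using cancel ct_mid[of "[(v, c), (v, \<not> c)]" "[]" p q a b] by simp
next
  case (comm a b u v c d)
  have "ex [(u, c), (v, d)] = ex [(v, d), (u, c)]" by (auto simp: fun_eq_iff)
  moreover have "ct p q [(u, c), (v, d)] = ct p q [(v, d), (u, c)]"
  proof -
    have "\<not> (u = p \<and> v = q)" "\<not> (v = p \<and> u = q)" using assms(2,3) comm(1) by auto
    then show ?thesis by auto
  qed
  ultimately show ?thesis using comm ct_mid[of "[(u, c), (v, d)]" "[(v, d), (u, c)]" p q a b] by simp
qed

lemma ct_rel:
  assumes "p \<noteq> q" "\<not> E p q" "\<not> E q p" "(x, y) \<in> raag_rel V E"
  shows "ct p q x = ct p q y"
  using assms(4) unfolding raag_rel_iff
  using equivclp_inv_fun[of "raag_step V E" "ct p q" x y] ct_step[OF assms(1,2,3)] by blast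

lemma commute_ex:
  assumes "p \<noteq> q" "\<not> E p q" "\<not> E q p"
    and P: "P \<in> carrier (raag V E)" and Q: "Q \<in> carrier (raag V E)"
    and c: "P \<otimes>\<^bsub>raag V E\<^esub> Q = Q \<otimes>\<^bsub>raag V E\<^esub> P"
  shows "exc P p * exc Q q = exc Q p * exc P q"
proof -
  obtain x where x: "x \<in> raag_words V" "P = cls V E x" using P by (elim carrier_raagE)
  obtain y where y: "y \<in> raag_words V" "Q = cls V E y" using Q by (elim carrier_raagE)
  have "cls V E (x @ y) = cls V E (y @ x)" using c x y by (simp add: raag_mult_cls)
  then have "(x @ y, y @ x) \<in> raag_rel V E" using x y by (simp add: cls_eq_iff)
  then have "ct p q (x @ y) = ct p q (y @ x)" by (rule ct_rel[OF assms(1,2,3)])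
  then have "ex x p * ex y q = ex y p * ex x q" by (simp add: ct_append)
  then show ?thesis using x y by (simp add: exc_cls)
qed

section \<open>Derived subgroup = kernel of exponent sums\<close>

lemma derived_exc:
  assumes "P \<in> derived (raag V E) (carrier (raag V E))"
  shows "P \<in> carrier (raag V E) \<and> exc P = 0"
proof -
  interpret group "raag V E" by (rule raag_group)
  show ?thesis
    using assms unfolding derived_def
  proof (induction rule: generate.induct)
    case one then show ?case by (simp add: exc_one)
  next
    case (incl h)
    then obtain h1 h2 where h: "h1 \<in> carrier (raag V E)" "h2 \<in> carrier (raag V E)"
      "h = h1 \<otimes>\<^bsub>raag V E\<^esub> h2 \<otimes>\<^bsub>raag V E\<^esub> inv\<^bsub>raag V E\<^esub> h1 \<otimes>\<^bsub>raag V E\<^esub> inv\<^bsub>raag V E\<^esub> h2"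
      by blast
    then show ?case by (simp add: exc_mult exc_inv)
  next
    case (inv h)
    then obtain h1 h2 where h: "h1 \<in> carrier (raag V E)" "h2 \<in> carrier (raag V E)"
      "h = h1 \<otimes>\<^bsub>raag V E\<^esub> h2 \<otimes>\<^bsub>raag V E\<^esub> inv\<^bsub>raag V E\<^esub> h1 \<otimes>\<^bsub>raag V E\<^esub> inv\<^bsub>raag V E\<^esub> h2"
      by blast
    then show ?case by (simp add: exc_mult exc_inv)
  next
    case (eng h1 h2)
    then show ?case by (simp add: exc_mult)
  qed
qed

lemma ex_pos_mem: "ex w v > 0 \<Longrightarrow> (v, True) \<in> set w"
  by (induction w rule: ex.induct) (auto split: if_splits)

lemma ex_neg_mem: "ex w v < 0 \<Longrightarrow> (v, False) \<in> set w"
  by (induction w rule: ex.induct) (auto split: if_splits)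

lemma exc_derived_words:
  assumes "x \<in> raag_words V" "ex x = (\<lambda>_. 0)"
  shows "cls V E x \<in> derived (raag V E) (carrier (raag V E))"
  using assms
proof (induction "length x" arbitrary: x rule: less_induct)
  case less
  interpret group "raag V E" by (rule raag_group)
  have sub: "subgroup (derived (raag V E) (carrier (raag V E))) (raag V E)"
    by (rule derived_is_subgroup) simp
  show ?case
  proof (cases x)
    case Nil
    then show ?thesis using subgroup.one_closed[OF sub] by (simp add: raag_one)
  next
    case (Cons l x')
    obtain v c where l: "l = (v, c)" by (cases l)
    have v: "v \<in> V" and x': "x' \<in> raag_words V" using less.prems(1) Cons l by auto
    have "ex x v = 0" using less.prems(2) by simp
    then have "ex x' v = (if c then -1 else 1)" using Cons l by auto
    then have "(v, \<not> c) \<in> set x'" using ex_pos_mem[of x' v] ex_neg_mem[of x' v] by (cases c) auto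
    then obtain s t where st: "x' = s @ (v, \<not> c) # t" by (meson split_list)
    have s: "s \<in> raag_words V" and t: "t \<in> raag_words V" using x' st by auto
    have lw: "[(v, c)] \<in> raag_words V" "[(v, \<not> c)] \<in> raag_words V" using v by auto
    define g where "g = cls V E [(v, c)]"
    define S where "S = cls V E s"
    define T where "T = cls V E t"
    have gc: "g \<in> carrier (raag V E)" and Sc: "S \<in> carrier (raag V E)" and Tc: "T \<in> carrier (raag V E)"
      using lw s t by (simp_all add: g_def S_def T_def cls_mem)
    have ginv: "cls V E [(v, \<not> c)] = inv\<^bsub>raag V E\<^esub> g"
      using raag_inv_cls[OF lw(1), of E] by (simp add: g_def winv_def)
    have "cls V E x = g \<otimes>\<^bsub>raag V E\<^esub> (S \<otimes>\<^bsub>raag V E\<^esub> (cls V E [(v, \<not> c)] \<otimes>\<^bsub>raag V E\<^esub> T))"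
      using Cons l st s t lw by (simp add: g_def S_def T_def raag_mult_cls)
    also have "\<dots> = (g \<otimes>\<^bsub>raag V E\<^esub> S \<otimes>\<^bsub>raag V E\<^esub> inv\<^bsub>raag V E\<^esub> g \<otimes>\<^bsub>raag V E\<^esub> inv\<^bsub>raag V E\<^esub> S)
                     \<otimes>\<^bsub>raag V E\<^esub> (S \<otimes>\<^bsub>raag V E\<^esub> T)"
    proof -
      have i: "inv\<^bsub>raag V E\<^esub> S \<otimes>\<^bsub>raag V E\<^esub> (S \<otimes>\<^bsub>raag V E\<^esub> T) = T"
        using Sc Tc by (simp add: m_assoc[symmetric])
      show ?thesis using gc Sc Tc by (simp add: ginv m_assoc i)
    qed
    finally have eq: "cls V E x = (g \<otimes>\<^bsub>raag V E\<^esub> S \<otimes>\<^bsub>raag V E\<^esub> inv\<^bsub>raag V E\<^esub> g \<otimes>\<^bsub>raag V E\<^esub> inv\<^bsub>raag V E\<^esub> S)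
                     \<otimes>\<^bsub>raag V E\<^esub> (S \<otimes>\<^bsub>raag V E\<^esub> T)" .
    have c1: "g \<otimes>\<^bsub>raag V E\<^esub> S \<otimes>\<^bsub>raag V E\<^esub> inv\<^bsub>raag V E\<^esub> g \<otimes>\<^bsub>raag V E\<^esub> inv\<^bsub>raag V E\<^esub> S
        \<in> derived (raag V E) (carrier (raag V E))"
      unfolding derived_def using gc Sc by (intro generate.incl) blast
    have "ex (s @ t) = (\<lambda>_. 0)"
    proof
      fix u
      have "ex x u = 0" using less.prems(2) by simp
      then show "ex (s @ t) u = 0" using Cons l st by (simp add: ex_append split: if_splits)
    qed
    moreover have "length (s @ t) < length x" using Cons st by simp
    ultimately have "cls V E (s @ t) \<in> derived (raag V E) (carrier (raag V E))"
      using less.hyps s t by simp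
    then have c2: "S \<otimes>\<^bsub>raag V E\<^esub> T \<in> derived (raag V E) (carrier (raag V E))"
      using s t by (simp add: S_def T_def raag_mult_cls)
    show ?thesis using eq c1 c2 subgroup.m_closed[OF sub] by simp
  qed
qed

lemma derived_iff_exc:
  assumes "P \<in> carrier (raag V E)"
  shows "P \<in> derived (raag V E) (carrier (raag V E)) \<longleftrightarrow> exc P = 0"
proof
  assume "P \<in> derived (raag V E) (carrier (raag V E))"
  then show "exc P = 0" using derived_exc by blast
next
  assume e: "exc P = 0"
  obtain x where x: "x \<in> raag_words V" "P = cls V E x" using assms by (elim carrier_raagE)
  have "ex x = (\<lambda>_. 0)" using e x by (simp add: exc_cls zero_fun_def)
  then show "P \<in> derived (raag V E) (carrier (raag V E))" using x exc_derived_words by blast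
qed

lemma mult_inv_derived_iff:
  assumes "P \<in> carrier (raag V E)" "Q \<in> carrier (raag V E)"
  shows "P \<otimes>\<^bsub>raag V E\<^esub> inv\<^bsub>raag V E\<^esub> Q \<in> derived (raag V E) (carrier (raag V E)) \<longleftrightarrow> exc P = exc Q"
proof -
  interpret group "raag V E" by (rule raag_group)
  have "P \<otimes>\<^bsub>raag V E\<^esub> inv\<^bsub>raag V E\<^esub> Q \<in> carrier (raag V E)" using assms by simp
  then show ?thesis using assms by (simp add: derived_iff_exc exc_mult exc_inv)
qed


lemma AutoGroup_carrier[simp]: "carrier (AutoGroup G) = auto G"
  by (simp add: AutoGroup_def)

context group
begin

lemma auto_carrier[simp]: "carrier (AutoGroup G) = auto G"
  by (simp add: AutoGroup_def)

lemma auto_Bij: "f \<in> auto G \<Longrightarrow> f \<in> Bij (carrier G)"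
  by (simp add: auto_def)

lemma auto_hom: "f \<in> auto G \<Longrightarrow> f \<in> hom G G"
  by (simp add: auto_def)

lemma auto_closed: "f \<in> auto G \<Longrightarrow> x \<in> carrier G \<Longrightarrow> f x \<in> carrier G"
  by (auto simp: auto_def hom_def)

lemma auto_mult_hom: "f \<in> auto G \<Longrightarrow> x \<in> carrier G \<Longrightarrow> y \<in> carrier G \<Longrightarrow> f (x \<otimes> y) = f x \<otimes> f y"
  by (auto simp: auto_def hom_def)

lemma auto_ext: "f \<in> auto G \<Longrightarrow> f \<in> extensional (carrier G)"
  by (simp add: auto_def Bij_def)

lemma auto_bij: "f \<in> auto G \<Longrightarrow> bij_betw f (carrier G) (carrier G)"
  by (simp add: auto_def Bij_def)

lemma auto_mult: "f \<in> auto G \<Longrightarrow> g \<in> auto G \<Longrightarrow> f \<otimes>\<^bsub>AutoGroup G\<^esub> g = compose (carrier G) f g"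
  by (simp add: AutoGroup_def BijGroup_def auto_def)

lemma auto_mult_apply: "f \<in> auto G \<Longrightarrow> g \<in> auto G \<Longrightarrow> x \<in> carrier G \<Longrightarrow> (f \<otimes>\<^bsub>AutoGroup G\<^esub> g) x = f (g x)"
  by (simp add: auto_mult compose_def)

lemma auto_one: "\<one>\<^bsub>AutoGroup G\<^esub> = (\<lambda>x\<in>carrier G. x)"
  by (simp add: AutoGroup_def BijGroup_def)

lemma auto_inv: "f \<in> auto G \<Longrightarrow> inv\<^bsub>AutoGroup G\<^esub> f = (\<lambda>x\<in>carrier G. inv_into (carrier G) f x)"
proof -
  assume f: "f \<in> auto G"
  have "inv\<^bsub>AutoGroup G\<^esub> f = inv\<^bsub>BijGroup (carrier G)\<^esub> f"
    unfolding AutoGroup_def using group.m_inv_consistent[OF group_BijGroup subgroup_auto f] .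
  also have "\<dots> = (\<lambda>x\<in>carrier G. inv_into (carrier G) f x)"
    using f by (simp add: inv_BijGroup auto_def)
  finally show ?thesis .
qed

lemma auto_m_closed: "f \<in> auto G \<Longrightarrow> g \<in> auto G \<Longrightarrow> f \<otimes>\<^bsub>AutoGroup G\<^esub> g \<in> auto G"
  using monoid.m_closed[OF group.is_monoid[OF AutoGroup]] by simp

lemma auto_inv_closed: "f \<in> auto G \<Longrightarrow> inv\<^bsub>AutoGroup G\<^esub> f \<in> auto G"
  using group.inv_closed[OF AutoGroup] by fastforce

lemma auto_inv_apply1: "f \<in> auto G \<Longrightarrow> x \<in> carrier G \<Longrightarrow> f ((inv\<^bsub>AutoGroup G\<^esub> f) x) = x"
  using auto_bij[of f] by (simp add: auto_inv bij_betw_inv_into_right)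

lemma auto_inv_apply2: "f \<in> auto G \<Longrightarrow> x \<in> carrier G \<Longrightarrow> (inv\<^bsub>AutoGroup G\<^esub> f) (f x) = x"
  using auto_bij[of f] auto_closed[of f x] by (simp add: auto_inv bij_betw_inv_into_left)

lemma auto_eqI: "f \<in> auto G \<Longrightarrow> g \<in> auto G \<Longrightarrow> (\<And>x. x \<in> carrier G \<Longrightarrow> f x = g x) \<Longrightarrow> f = g"
  using auto_ext extensionalityI by metis

lemma auto_derived:
  assumes f: "f \<in> auto G" and d: "d \<in> derived G (carrier G)"
  shows "f d \<in> derived G (carrier G)"
proof -
  interpret gh: group_hom G G f
    using auto_hom[OF f] by (simp add: group_hom_def group_hom_axioms_def is_group)
  have "f ` derived G (carrier G) = derived G (f ` carrier G)"
    using gh.derived_img[of "carrier G"] by simp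
  also have "\<dots> \<subseteq> derived G (carrier G)"
    by (rule mono_derived) (use auto_closed[OF f] in auto)
  finally show ?thesis using d by blast
qed

lemma IA_iff: "f \<in> IA G \<longleftrightarrow> f \<in> auto G \<and> (\<forall>x\<in>carrier G. f x \<otimes> inv x \<in> derived G (carrier G))"
  by (simp add: IA_def)

lemma IA_normal: "IA G \<lhd> AutoGroup G"
proof -
  interpret A: group "AutoGroup G" by (rule AutoGroup)
  have dsub: "subgroup (derived G (carrier G)) G" by (rule derived_is_subgroup) simp
  have dc: "d \<in> derived G (carrier G) \<Longrightarrow> d \<in> carrier G" for d
    using subgroup.subset[OF dsub] by blast
  have sub: "subgroup (IA G) (AutoGroup G)"
  proof (rule A.subgroupI)
    show "IA G \<subseteq> carrier (AutoGroup G)" by (auto simp: IA_def)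
    show "IA G \<noteq> {}"
    proof -
      have "\<one>\<^bsub>AutoGroup G\<^esub> \<in> IA G"
        using subgroup.one_closed[OF dsub] id_in_auto by (simp add: IA_iff auto_one)
      then show ?thesis by blast
    qed
  next
    fix f assume f: "f \<in> IA G"
    then have fa: "f \<in> auto G" by (simp add: IA_iff)
    show "inv\<^bsub>AutoGroup G\<^esub> f \<in> IA G"
      unfolding IA_iff
    proof (intro conjI ballI)
      show "inv\<^bsub>AutoGroup G\<^esub> f \<in> auto G" by (rule auto_inv_closed[OF fa])
      fix x assume x: "x \<in> carrier G"
      define y where "y = (inv\<^bsub>AutoGroup G\<^esub> f) x"
      have y: "y \<in> carrier G" using auto_closed[OF auto_inv_closed[OF fa] x] by (simp add: y_def)
      have fy: "f y = x" using auto_inv_apply1[OF fa x] by (simp add: y_def)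
      have "f y \<otimes> inv y \<in> derived G (carrier G)" using f y by (simp add: IA_iff)
      then have "inv (f y \<otimes> inv y) \<in> derived G (carrier G)" by (rule subgroup.m_inv_closed[OF dsub])
      moreover have "inv (f y \<otimes> inv y) = y \<otimes> inv (f y)"
        using y auto_closed[OF fa y] by (simp add: inv_mult_group)
      ultimately show "(inv\<^bsub>AutoGroup G\<^esub> f) x \<otimes> inv x \<in> derived G (carrier G)"
        using fy by (simp add: y_def)
    qed
  next
    fix f g assume f: "f \<in> IA G" and g: "g \<in> IA G"
    then have fa: "f \<in> auto G" and ga: "g \<in> auto G" by (simp_all add: IA_iff)
    show "f \<otimes>\<^bsub>AutoGroup G\<^esub> g \<in> IA G"
      unfolding IA_iff
    proof (intro conjI ballI)
      show "f \<otimes>\<^bsub>AutoGroup G\<^esub> g \<in> auto G" using A.m_closed fa ga by simp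
      fix x assume x: "x \<in> carrier G"
      have gx: "g x \<in> carrier G" by (rule auto_closed[OF ga x])
      have 1: "f (g x) \<otimes> inv (g x) \<in> derived G (carrier G)" using f gx by (simp add: IA_iff)
      have 2: "g x \<otimes> inv x \<in> derived G (carrier G)" using g x by (simp add: IA_iff)
      have "(f (g x) \<otimes> inv (g x)) \<otimes> (g x \<otimes> inv x) = f (g x) \<otimes> inv x"
      proof -
        have "inv (g x) \<otimes> (g x \<otimes> inv x) = inv x" using gx x by (simp add: m_assoc[symmetric])
        then show ?thesis using gx x auto_closed[OF fa gx] by (simp add: m_assoc)
      qed
      then show "(f \<otimes>\<^bsub>AutoGroup G\<^esub> g) x \<otimes> inv x \<in> derived G (carrier G)"
        using subgroup.m_closed[OF dsub 1 2] by (simp add: auto_mult_apply fa ga x)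
    qed
  qed
  show ?thesis
    unfolding A.normal_inv_iff
  proof (intro conjI ballI sub)
    fix F n assume F: "F \<in> carrier (AutoGroup G)" and n: "n \<in> IA G"
    then have Fa: "F \<in> auto G" and na: "n \<in> auto G" by (simp_all add: IA_iff)
    define F' where "F' = inv\<^bsub>AutoGroup G\<^esub> F"
    have F'a: "F' \<in> auto G" using auto_inv_closed[OF Fa] by (simp add: F'_def)
    show "F \<otimes>\<^bsub>AutoGroup G\<^esub> n \<otimes>\<^bsub>AutoGroup G\<^esub> inv\<^bsub>AutoGroup G\<^esub> F \<in> IA G"
      unfolding IA_iff
    proof (intro conjI ballI)
      show "F \<otimes>\<^bsub>AutoGroup G\<^esub> n \<otimes>\<^bsub>AutoGroup G\<^esub> inv\<^bsub>AutoGroup G\<^esub> F \<in> auto G"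
        using F na A.m_closed A.inv_closed by (metis auto_carrier)
      fix x assume x: "x \<in> carrier G"
      define y where "y = F' x"
      have y: "y \<in> carrier G" using auto_closed[OF F'a x] by (simp add: y_def)
      have Fy: "F y = x" using auto_inv_apply1[OF Fa x] by (simp add: y_def F'_def)
      have ny: "n y \<in> carrier G" by (rule auto_closed[OF na y])
      have "n y \<otimes> inv y \<in> derived G (carrier G)" using n y by (simp add: IA_iff)
      then have "F (n y \<otimes> inv y) \<in> derived G (carrier G)" by (rule auto_derived[OF Fa])
      moreover have "F (n y \<otimes> inv y) = F (n y) \<otimes> inv (F y)"
      proof -
        interpret gh: group_hom G G F
          using auto_hom[OF Fa] by (simp add: group_hom_def group_hom_axioms_def is_group)
        show ?thesis using ny y by simp
      qed
      moreover have "(F \<otimes>\<^bsub>AutoGroup G\<^esub> n \<otimes>\<^bsub>AutoGroup G\<^esub> inv\<^bsub>AutoGroup G\<^esub> F) x = F (n y)"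
      proof -
        have Fn: "F \<otimes>\<^bsub>AutoGroup G\<^esub> n \<in> auto G" using A.m_closed Fa na by (metis auto_carrier)
        show ?thesis using auto_mult_apply[OF Fn F'a x] auto_mult_apply[OF Fa na y]
          by (simp add: y_def F'_def)
      qed
      ultimately show "(F \<otimes>\<^bsub>AutoGroup G\<^esub> n \<otimes>\<^bsub>AutoGroup G\<^esub> inv\<^bsub>AutoGroup G\<^esub> F) x \<otimes> inv x
          \<in> derived G (carrier G)" using Fy by simp
    qed
  qed
qed

end


locale cov =
  fixes VL :: "'w set" and EL :: "'w \<Rightarrow> 'w \<Rightarrow> bool"
    and VG :: "'v set" and EG :: "'v \<Rightarrow> 'v \<Rightarrow> bool"
    and \<phi> :: "'w \<Rightarrow> 'v"
  assumes sgL: "simple_graph VL EL" and sgG: "simple_graph VG EG"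
    and niL: "no_isolated_vertices VL EL" and rc: "regular_covering VL EL VG EG \<phi>"
begin

abbreviation "AL \<equiv> raag VL EL"
abbreviation "AG \<equiv> raag VG EG"
abbreviation "\<Phi> \<equiv> raag_hom VL EL VG EG \<phi>"
abbreviation "lift f F \<equiv> is_lift VL EL VG EG \<phi> f F"
abbreviation "pp \<equiv> lifted_aut VL EL VG EG \<phi>"
abbreviation "FAutS \<equiv> FAut VL EL VG EG \<phi>"
abbreviation "LAutS \<equiv> LAut VL EL VG EG \<phi>"
abbreviation "FDS \<equiv> FD VL EL VG EG \<phi>"
abbreviation "DeckS \<equiv> Deck VL EL \<phi>"

lemma finL: "finite VL" using sgL by (simp add: simple_graph_def)
lemma EL_V: "EL u v \<Longrightarrow> u \<in> VL \<and> v \<in> VL" using sgL by (simp add: simple_graph_def)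
lemma EL_sym: "EL u v \<Longrightarrow> EL v u" using sgL by (simp add: simple_graph_def)
lemma EL_irrefl: "\<not> EL u u" using sgL by (auto simp: simple_graph_def)
lemma EG_irrefl: "\<not> EG u u" using sgG by (auto simp: simple_graph_def)
lemma covm: "covering_map VL EL VG EG \<phi>" using rc by (simp add: regular_covering_def)
lemma phi_img: "\<phi> ` VL = VG" using covm by (simp add: covering_map_def)
lemma phi_edge: "EL u v \<Longrightarrow> EG (\<phi> u) (\<phi> v)" using covm by (simp add: covering_map_def)
lemma phi_edge_neq: "EL u v \<Longrightarrow> \<phi> u \<noteq> \<phi> v" using phi_edge EG_irrefl by metis
lemma nbr_inj:
  assumes "y \<in> VL" "EL y x" "EL y x'" "\<phi> x = \<phi> x'"
  shows "x = x'"
proof -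
  have "inj_on \<phi> (neighbours EL y)" using covm assms(1) by (simp add: covering_map_def bij_betw_def)
  then show ?thesis using assms by (auto simp: neighbours_def inj_on_def)
qed

lemma sm_phi: "simp_map VL EL VG EG \<phi>"
  using phi_img phi_edge by (simp add: simp_map_def)

lemma grpL: "group AL" by (rule raag_group)
lemma grpG: "group AG" by (rule raag_group)

lemma Phi_hom: "\<Phi> \<in> hom AL AG" by (rule raag_hom_hom[OF sm_phi])

lemma Phi_closed: "P \<in> carrier AL \<Longrightarrow> \<Phi> P \<in> carrier AG"
  by (rule raag_hom_mem[OF sm_phi])

lemma Phi_surj:
  assumes "Q \<in> carrier AG"
  shows "\<exists>P\<in>carrier AL. \<Phi> P = Q"
proof -
  obtain y where y: "y \<in> raag_words VG" "Q = cls VG EG y" using assms by (elim carrier_raagE)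
  define \<psi> where "\<psi> = inv_into VL \<phi>"
  have psi: "v \<in> VG \<Longrightarrow> \<psi> v \<in> VL \<and> \<phi> (\<psi> v) = v" for v
    using phi_img by (auto simp: \<psi>_def inv_into_into f_inv_into_f)
  have xw: "mapw \<psi> y \<in> raag_words VL"
    using y(1) psi by (intro mapw_words) auto
  have "mapw \<phi> (mapw \<psi> y) = mapw (\<phi> \<circ> \<psi>) y" by (simp add: mapw_comp)
  also have "\<dots> = mapw (\<lambda>v. v) y" using y(1) psi by (intro mapw_cong) auto
  finally have "mapw \<phi> (mapw \<psi> y) = y" by simp
  then have "\<Phi> (cls VL EL (mapw \<psi> y)) = Q" using y xw by (simp add: raag_hom_cls[OF sm_phi])
  then show ?thesis using xw cls_mem by blast
qed

lemma Phi_img: "\<Phi> ` carrier AL = carrier AG"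
  using Phi_surj Phi_closed by blast

lemma Phi_mult: "P \<in> carrier AL \<Longrightarrow> Q \<in> carrier AL \<Longrightarrow> \<Phi> (P \<otimes>\<^bsub>AL\<^esub> Q) = \<Phi> P \<otimes>\<^bsub>AG\<^esub> \<Phi> Q"
  using Phi_hom by (simp add: hom_mult)

lemma Phi_group_hom: "group_hom AL AG \<Phi>"
  using Phi_hom grpL grpG by (simp add: group_hom_def group_hom_axioms_def)

lemma Phi_inv: "P \<in> carrier AL \<Longrightarrow> \<Phi> (inv\<^bsub>AL\<^esub> P) = inv\<^bsub>AG\<^esub> \<Phi> P"
  using group_hom.hom_inv[OF Phi_group_hom] by simp

lemma Phi_derived: "d \<in> derived AL (carrier AL) \<Longrightarrow> \<Phi> d \<in> derived AG (carrier AG)"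
  using group_hom.derived_img[OF Phi_group_hom, of "carrier AL"] Phi_img by auto

section \<open>Lifts\<close>

lemma is_liftD: "lift f F \<Longrightarrow> x \<in> carrier AL \<Longrightarrow> f (\<Phi> x) = \<Phi> (F x)"
  by (simp add: is_lift_def)

lemma lift_unique:
  assumes "f \<in> auto AG" "f' \<in> auto AG" "lift f F" "lift f' F"
  shows "f = f'"
proof (rule group.auto_eqI[OF grpG assms(1,2)])
  fix z assume "z \<in> carrier AG"
  then obtain x where "x \<in> carrier AL" "z = \<Phi> x" using Phi_surj by blast
  then show "f z = f' z" using assms(3,4) by (simp add: is_lift_def)
qed

lemma lift_mult:
  assumes F: "F \<in> auto AL" "F' \<in> auto AL" and f: "f \<in> auto AG" "f' \<in> auto AG"
    and l: "lift f F" "lift f' F'"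
  shows "lift (f \<otimes>\<^bsub>AutoGroup AG\<^esub> f') (F \<otimes>\<^bsub>AutoGroup AL\<^esub> F')"
  unfolding is_lift_def
proof
  fix x assume x: "x \<in> carrier AL"
  have F'x: "F' x \<in> carrier AL" using group.auto_closed[OF grpL F(2) x] .
  have "(f \<otimes>\<^bsub>AutoGroup AG\<^esub> f') (\<Phi> x) = f (f' (\<Phi> x))"
    using group.auto_mult_apply[OF grpG f Phi_closed[OF x]] .
  also have "\<dots> = \<Phi> (F (F' x))" using l x F'x by (simp add: is_lift_def)
  also have "\<dots> = \<Phi> ((F \<otimes>\<^bsub>AutoGroup AL\<^esub> F') x)"
    using group.auto_mult_apply[OF grpL F x] by simp
  finally show "(f \<otimes>\<^bsub>AutoGroup AG\<^esub> f') (\<Phi> x) = \<Phi> ((F \<otimes>\<^bsub>AutoGroup AL\<^esub> F') x)" .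
qed

lemma lift_inv:
  assumes F: "F \<in> auto AL" and f: "f \<in> auto AG" and l: "lift f F"
  shows "lift (inv\<^bsub>AutoGroup AG\<^esub> f) (inv\<^bsub>AutoGroup AL\<^esub> F)"
  unfolding is_lift_def
proof
  fix x assume x: "x \<in> carrier AL"
  define y where "y = (inv\<^bsub>AutoGroup AL\<^esub> F) x"
  have y: "y \<in> carrier AL" using group.auto_closed[OF grpL group.auto_inv_closed[OF grpL F] x] by (simp add: y_def)
  have Fy: "F y = x" using group.auto_inv_apply1[OF grpL F x] by (simp add: y_def)
  have "f (\<Phi> y) = \<Phi> x" using l y Fy by (simp add: is_lift_def)
  then have "(inv\<^bsub>AutoGroup AG\<^esub> f) (\<Phi> x) = \<Phi> y"
    using group.auto_inv_apply2[OF grpG f Phi_closed[OF y]] by simp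
  then show "(inv\<^bsub>AutoGroup AG\<^esub> f) (\<Phi> x) = \<Phi> ((inv\<^bsub>AutoGroup AL\<^esub> F) x)" by (simp add: y_def)
qed

lemma lift_one: "lift (\<one>\<^bsub>AutoGroup AG\<^esub>) (\<one>\<^bsub>AutoGroup AL\<^esub>)"
  by (simp add: is_lift_def group.auto_one[OF grpG] group.auto_one[OF grpL] Phi_closed)

lemma one_autoL: "\<one>\<^bsub>AutoGroup AL\<^esub> \<in> auto AL"
  using group.id_in_auto[OF grpL] by (simp add: group.auto_one[OF grpL])
lemma one_autoG: "\<one>\<^bsub>AutoGroup AG\<^esub> \<in> auto AG"
  using group.id_in_auto[OF grpG] by (simp add: group.auto_one[OF grpG])

lemma FAut_sub: "subgroup FAutS (AutoGroup AL)"
proof (rule group.subgroupI[OF group.AutoGroup[OF grpL]])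
  show "FAutS \<subseteq> carrier (AutoGroup AL)" by (auto simp: FAut_def)
  show "FAutS \<noteq> {}" using lift_one one_autoL one_autoG by (auto simp: FAut_def)
next
  fix F assume "F \<in> FAutS"
  then obtain f where "F \<in> auto AL" "f \<in> auto AG" "lift f F" by (auto simp: FAut_def)
  then show "inv\<^bsub>AutoGroup AL\<^esub> F \<in> FAutS"
    using lift_inv group.auto_inv_closed[OF grpL] group.auto_inv_closed[OF grpG]
    unfolding FAut_def by blast
next
  fix F F' assume "F \<in> FAutS" "F' \<in> FAutS"
  then obtain f f' where "F \<in> auto AL" "f \<in> auto AG" "lift f F" "F' \<in> auto AL" "f' \<in> auto AG" "lift f' F'"
    by (auto simp: FAut_def)
  then show "F \<otimes>\<^bsub>AutoGroup AL\<^esub> F' \<in> FAutS"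
    using lift_mult group.auto_m_closed[OF grpL] group.auto_m_closed[OF grpG]
    unfolding FAut_def by blast
qed

lemma LAut_sub: "subgroup LAutS (AutoGroup AG)"
proof (rule group.subgroupI[OF group.AutoGroup[OF grpG]])
  show "LAutS \<subseteq> carrier (AutoGroup AG)" by (auto simp: LAut_def)
  show "LAutS \<noteq> {}" using lift_one one_autoL one_autoG by (auto simp: LAut_def)
next
  fix f assume "f \<in> LAutS"
  then obtain F where "F \<in> auto AL" "f \<in> auto AG" "lift f F" by (auto simp: LAut_def)
  then show "inv\<^bsub>AutoGroup AG\<^esub> f \<in> LAutS"
    using lift_inv group.auto_inv_closed[OF grpL] group.auto_inv_closed[OF grpG]
    by (auto simp: LAut_def)
next
  fix f f' assume "f \<in> LAutS" "f' \<in> LAutS"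
  then obtain F F' where "F \<in> auto AL" "f \<in> auto AG" "lift f F" "F' \<in> auto AL" "f' \<in> auto AG" "lift f' F'"
    by (auto simp: LAut_def)
  then show "f \<otimes>\<^bsub>AutoGroup AG\<^esub> f' \<in> LAutS"
    using lift_mult group.auto_m_closed[OF grpL] group.auto_m_closed[OF grpG]
    unfolding LAut_def by blast
qed

lemma FD_alt: "FDS = {F \<in> auto AL. lift (\<one>\<^bsub>AutoGroup AG\<^esub>) F}"
  by (simp add: FD_def group.auto_one[OF grpG])

lemma FD_sub_FAut: "FDS \<subseteq> FAutS"
  using one_autoG by (auto simp: FD_alt FAut_def)

lemma FD_sub: "subgroup FDS (AutoGroup AL)"
proof (rule group.subgroupI[OF group.AutoGroup[OF grpL]])
  show "FDS \<subseteq> carrier (AutoGroup AL)" by (auto simp: FD_def)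
  show "FDS \<noteq> {}" using lift_one one_autoL by (auto simp: FD_alt)
next
  fix F assume "F \<in> FDS"
  then have "F \<in> auto AL" "lift (\<one>\<^bsub>AutoGroup AG\<^esub>) F" by (auto simp: FD_alt)
  then show "inv\<^bsub>AutoGroup AL\<^esub> F \<in> FDS"
    using lift_inv[OF _ one_autoG] group.auto_inv_closed[OF grpL] monoid.inv_one[OF group.is_monoid[OF group.AutoGroup[OF grpG]]]
    by (auto simp: FD_alt)
next
  fix F F' assume "F \<in> FDS" "F' \<in> FDS"
  then have "F \<in> auto AL" "lift (\<one>\<^bsub>AutoGroup AG\<^esub>) F" "F' \<in> auto AL" "lift (\<one>\<^bsub>AutoGroup AG\<^esub>) F'"
    by (auto simp: FD_alt)
  then show "F \<otimes>\<^bsub>AutoGroup AL\<^esub> F' \<in> FDS"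
    using lift_mult[OF _ _ one_autoG one_autoG] group.auto_m_closed[OF grpL]
      monoid.l_one[OF group.is_monoid[OF group.AutoGroup[OF grpG]]] one_autoG
    unfolding FD_alt by (metis (no_types, lifting) AutoGroup_carrier mem_Collect_eq)
qed

lemma p_spec:
  assumes "F \<in> FAutS"
  shows "pp F \<in> auto AG \<and> lift (pp F) F"
proof -
  obtain f where f: "f \<in> auto AG" "lift f F" using assms by (auto simp: FAut_def)
  have "\<exists>!f. f \<in> auto AG \<and> lift f F" using f lift_unique by blast
  then show ?thesis unfolding lifted_aut_def by (rule theI')
qed

lemma p_eq:
  assumes "F \<in> auto AL" "f \<in> auto AG" "lift f F"
  shows "pp F = f"
proof -
  have "F \<in> FAutS" using assms by (auto simp: FAut_def)
  then show ?thesis using p_spec lift_unique assms by blast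
qed

lemma p_LAut: "F \<in> FAutS \<Longrightarrow> pp F \<in> LAutS"
  using p_spec by (auto simp: LAut_def FAut_def)

lemma FAut_auto: "F \<in> FAutS \<Longrightarrow> F \<in> auto AL" by (simp add: FAut_def)
lemma LAut_auto: "f \<in> LAutS \<Longrightarrow> f \<in> auto AG" by (simp add: LAut_def)

lemma p_mult:
  assumes "F \<in> FAutS" "F' \<in> FAutS"
  shows "pp (F \<otimes>\<^bsub>AutoGroup AL\<^esub> F') = pp F \<otimes>\<^bsub>AutoGroup AG\<^esub> pp F'"
proof (rule p_eq)
  show "F \<otimes>\<^bsub>AutoGroup AL\<^esub> F' \<in> auto AL"
    using group.auto_m_closed[OF grpL] assms FAut_auto by blast
  show "pp F \<otimes>\<^bsub>AutoGroup AG\<^esub> pp F' \<in> auto AG"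
    using group.auto_m_closed[OF grpG] assms p_spec by blast
  show "lift (pp F \<otimes>\<^bsub>AutoGroup AG\<^esub> pp F') (F \<otimes>\<^bsub>AutoGroup AL\<^esub> F')"
    using lift_mult assms p_spec FAut_auto by blast
qed

lemma p_inv:
  assumes "F \<in> FAutS"
  shows "pp (inv\<^bsub>AutoGroup AL\<^esub> F) = inv\<^bsub>AutoGroup AG\<^esub> pp F"
  using p_eq[OF group.auto_inv_closed[OF grpL] group.auto_inv_closed[OF grpG] lift_inv] assms p_spec FAut_auto
  by blast

lemma p_one_iff:
  assumes "F \<in> FAutS"
  shows "pp F = \<one>\<^bsub>AutoGroup AG\<^esub> \<longleftrightarrow> F \<in> FDS"
proof
  assume "pp F = \<one>\<^bsub>AutoGroup AG\<^esub>"
  then show "F \<in> FDS" using p_spec[OF assms] FAut_auto[OF assms] by (simp add: FD_alt)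
next
  assume "F \<in> FDS"
  then show "pp F = \<one>\<^bsub>AutoGroup AG\<^esub>" using p_eq one_autoG by (simp add: FD_alt)
qed

lemma p_surj: "pp ` FAutS = LAutS"
proof
  show "pp ` FAutS \<subseteq> LAutS" using p_LAut by blast
  show "LAutS \<subseteq> pp ` FAutS"
  proof
    fix f assume "f \<in> LAutS"
    then obtain F where F: "F \<in> auto AL" "f \<in> auto AG" "lift f F" by (auto simp: LAut_def)
    then have "F \<in> FAutS" by (auto simp: FAut_def)
    moreover have "pp F = f" using p_eq F by blast
    ultimately show "f \<in> pp ` FAutS" by blast
  qed
qed

lemma p_IA:
  assumes F: "F \<in> FAutS" "F \<in> IA AL"
  shows "pp F \<in> IA AG"
  unfolding group.IA_iff[OF grpG]
proof (intro conjI ballI)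
  show "pp F \<in> auto AG" using p_spec F by blast
  fix z assume "z \<in> carrier AG"
  then obtain x where x: "x \<in> carrier AL" "z = \<Phi> x" using Phi_surj by blast
  have Fx: "F x \<in> carrier AL" using group.auto_closed[OF grpL FAut_auto[OF F(1)] x(1)] .
  have "F x \<otimes>\<^bsub>AL\<^esub> inv\<^bsub>AL\<^esub> x \<in> derived AL (carrier AL)" using F(2) x(1) group.IA_iff[OF grpL] by blast
  then have "\<Phi> (F x \<otimes>\<^bsub>AL\<^esub> inv\<^bsub>AL\<^esub> x) \<in> derived AG (carrier AG)" by (rule Phi_derived)
  moreover have "\<Phi> (F x \<otimes>\<^bsub>AL\<^esub> inv\<^bsub>AL\<^esub> x) = pp F z \<otimes>\<^bsub>AG\<^esub> inv\<^bsub>AG\<^esub> z"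
    using Fx x p_spec[OF F(1)] group.inv_closed[OF grpL]
    by (simp add: Phi_mult Phi_inv is_lift_def)
  ultimately show "pp F z \<otimes>\<^bsub>AG\<^esub> inv\<^bsub>AG\<^esub> z \<in> derived AG (carrier AG)" by simp
qed

end


context cov
begin

abbreviation "fib s \<equiv> {x\<in>VL. \<phi> x = s}"

lemma fib_finite: "finite (fib s)" using finL by simp

lemma claimA:
  fixes a b :: "'w \<Rightarrow> int"
  assumes uv: "EL u v"
    and sa: "\<forall>s\<in>VG. (\<Sum>x\<in>fib s. a x) = (if s = \<phi> u then 1 else 0)"
    and sb: "\<forall>s\<in>VG. (\<Sum>x\<in>fib s. b x) = (if s = \<phi> v then 1 else 0)"
    and mn: "\<forall>x\<in>VL. \<forall>y\<in>VL. x \<noteq> y \<longrightarrow> \<not> EL x y \<longrightarrow> a x * b y = a y * b x"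
    and y: "y \<in> VL" "a y \<noteq> 0"
  shows "\<phi> y = \<phi> u"
proof -
  define D where "D x y = a x * b y - a y * b x" for x y
  have D0: "EL x y" if "x \<in> VL" "y \<in> VL" "D x y \<noteq> 0" for x y
    using that mn by (cases "x = y") (auto simp: D_def)
  have Dsum: "(\<Sum>x\<in>fib s. D x y) = (if s = \<phi> u then 1 else 0) * b y - a y * (if s = \<phi> v then 1 else 0)"
    if "s \<in> VG" for s y
  proof -
    have "(\<Sum>x\<in>fib s. D x y) = (\<Sum>x\<in>fib s. a x) * b y - a y * (\<Sum>x\<in>fib s. b x)"
      by (simp add: D_def sum_subtractf sum_distrib_right sum_distrib_left)
    then show ?thesis using sa sb that by simp
  qed
  have Dsingle: "(\<Sum>x'\<in>fib s. D x' y) = D x y" if "x \<in> fib s" "y \<in> VL" "D x y \<noteq> 0" for x y s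
  proof -
    have exy: "EL x y" using D0 that by auto
    have "(\<Sum>x'\<in>fib s. D x' y) = D x y + (\<Sum>x'\<in>fib s - {x}. D x' y)"
      using that(1) fib_finite by (simp add: sum.remove)
    also have "(\<Sum>x'\<in>fib s - {x}. D x' y) = 0"
    proof (rule sum.neutral, rule ballI, rule ccontr)
      fix x' assume x': "x' \<in> fib s - {x}" and nz: "D x' y \<noteq> 0"
      then have "EL x' y" using D0 that by auto
      then have "x' = x" using nbr_inj[of y x' x] that(1,2) x' exy EL_sym by auto
      then show False using x' by simp
    qed
    finally show ?thesis by simp
  qed
  have puv: "\<phi> u \<noteq> \<phi> v" using phi_edge_neq uv by blast
  have vG: "\<phi> v \<in> VG" using phi_img EL_V[OF uv] by blast
  have "(\<Sum>x\<in>fib (\<phi> v). D x y) = - a y" using Dsum[OF vG] puv by simp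
  then have "(\<Sum>x\<in>fib (\<phi> v). D x y) \<noteq> 0" using y by simp
  then obtain x where x: "x \<in> fib (\<phi> v)" "D x y \<noteq> 0" by (meson sum.not_neutral_contains_not_neutral)
  have exy: "EL x y" using D0 x y by auto
  have Dyx: "D y x \<noteq> 0" using x(2) by (simp add: D_def algebra_simps)
  have yG: "\<phi> y \<in> VG" using phi_img y by blast
  have "(\<Sum>z\<in>fib (\<phi> y). D z x) = D y x" using Dsingle[of y "\<phi> y" x] y x Dyx by auto
  then have "(if \<phi> y = \<phi> u then 1 else 0) * b x - a x * (if \<phi> y = \<phi> v then 1 else 0) \<noteq> 0"
    using Dsum[OF yG, of x] Dyx by simp
  then have "\<phi> y = \<phi> u \<or> \<phi> y = \<phi> v" by (auto split: if_splits)
  moreover have "\<phi> y \<noteq> \<phi> v" using phi_edge_neq[OF exy] x by auto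
  ultimately show ?thesis by blast
qed

lemma key_comb:
  fixes a b :: "'w \<Rightarrow> int"
  assumes uv: "EL u v"
    and sa: "\<forall>s\<in>VG. (\<Sum>x\<in>fib s. a x) = (if s = \<phi> u then 1 else 0)"
    and sb: "\<forall>s\<in>VG. (\<Sum>x\<in>fib s. b x) = (if s = \<phi> v then 1 else 0)"
    and mn: "\<forall>x\<in>VL. \<forall>y\<in>VL. x \<noteq> y \<longrightarrow> \<not> EL x y \<longrightarrow> a x * b y = a y * b x"
    and out: "\<forall>z. z \<notin> VL \<longrightarrow> a z = 0"
  shows "\<exists>w\<in>VL. \<phi> w = \<phi> u \<and> a = (\<lambda>z. if z = w then 1 else 0)"
proof -
  have A: "\<phi> y = \<phi> u" if "y \<in> VL" "a y \<noteq> 0" for y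
    using claimA[OF uv sa sb mn that] .
  have mn': "\<forall>x\<in>VL. \<forall>y\<in>VL. x \<noteq> y \<longrightarrow> \<not> EL x y \<longrightarrow> b x * a y = b y * a x"
    using mn by (metis mult.commute)
  have B: "\<phi> y = \<phi> v" if "y \<in> VL" "b y \<noteq> 0" for y
    using claimA[OF EL_sym[OF uv] sb sa mn' that] .
  have puv: "\<phi> u \<noteq> \<phi> v" using phi_edge_neq uv by blast
  have vG: "\<phi> v \<in> VG" and uG: "\<phi> u \<in> VG" using phi_img EL_V[OF uv] by blast+
  have "(\<Sum>x\<in>fib (\<phi> v). b x) = 1" using sb vG by simp
  then obtain y where y: "y \<in> fib (\<phi> v)" "b y \<noteq> 0"
    by (metis (no_types, lifting) one_neq_zero sum.not_neutral_contains_not_neutral)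
  have C: "x = x'" if x: "x \<in> VL" "a x \<noteq> 0" and x': "x' \<in> VL" "a x' \<noteq> 0" for x x'
  proof -
    have ay: "a y = 0" using A[of y] y puv by auto
    have bx: "b x = 0" using B[of x] A[OF x] x puv by auto
    have bx': "b x' = 0" using B[of x'] A[OF x'] x' puv by auto
    have xy: "x \<noteq> y" using A[OF x] y puv by auto
    have x'y: "x' \<noteq> y" using A[OF x'] y puv by auto
    have "EL x y"
    proof (rule ccontr)
      assume "\<not> EL x y"
      then have "a x * b y = a y * b x" using mn x y xy by auto
      then show False using ay bx x(2) y(2) by simp
    qed
    moreover have "EL x' y"
    proof (rule ccontr)
      assume "\<not> EL x' y"
      then have "a x' * b y = a y * b x'" using mn x' y x'y by auto
      then show False using ay bx' x'(2) y(2) by simp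
    qed
    ultimately show ?thesis using nbr_inj[of y x x'] y EL_sym A[OF x] A[OF x'] by auto
  qed
  have "(\<Sum>x\<in>fib (\<phi> u). a x) = 1" using sa uG by simp
  then obtain w where w: "w \<in> fib (\<phi> u)" "a w \<noteq> 0"
    by (metis (no_types, lifting) one_neq_zero sum.not_neutral_contains_not_neutral)
  have zero: "a z = 0" if "z \<noteq> w" for z
    using C[of z w] w out that by (cases "z \<in> VL") auto
  have "(\<Sum>x\<in>fib (\<phi> u). a x) = a w"
    using w fib_finite zero by (simp add: sum.remove[of _ w] sum.neutral)
  then have "a w = 1" using sa uG by simp
  then have "a = (\<lambda>z. if z = w then 1 else 0)" using zero by auto
  then show ?thesis using w by auto
qed

end


lemma exc_IA:
  assumes "f \<in> IA (raag V E)" "z \<in> carrier (raag V E)"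
  shows "exc (f z) = exc z"
proof -
  interpret group "raag V E" by (rule raag_group)
  have "f \<in> auto (raag V E)" using assms(1) by (simp add: IA_iff)
  then have fz: "f z \<in> carrier (raag V E)" using auto_closed assms(2) by blast
  have "f z \<otimes>\<^bsub>raag V E\<^esub> inv\<^bsub>raag V E\<^esub> z \<in> derived (raag V E) (carrier (raag V E))"
    using assms by (simp add: IA_iff)
  then show ?thesis using mult_inv_derived_iff[OF fz assms(2)] by simp
qed

lemma IA_exc:
  assumes "f \<in> auto (raag V E)" "\<And>z. z \<in> carrier (raag V E) \<Longrightarrow> exc (f z) = exc z"
  shows "f \<in> IA (raag V E)"
proof -
  interpret group "raag V E" by (rule raag_group)
  show ?thesis unfolding IA_iff
    using assms mult_inv_derived_iff auto_closed by blast
qed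

context cov
begin

abbreviation "gen u \<equiv> cls VL EL [(u, True)]"
abbreviation "RH \<mu> \<equiv> raag_hom VL EL VL EL \<mu>"

lemma gen_mem: "u \<in> VL \<Longrightarrow> gen u \<in> carrier AL"
  by (simp add: cls_mem)

lemma exc_gen: "u \<in> VL \<Longrightarrow> exc (gen u) = (\<lambda>z. if z = u then 1 else 0)"
  by (simp add: exc_cls fun_eq_iff)

lemma gen_comm:
  assumes "EL u v"
  shows "gen u \<otimes>\<^bsub>AL\<^esub> gen v = gen v \<otimes>\<^bsub>AL\<^esub> gen u"
proof -
  have uv: "u \<in> VL" "v \<in> VL" using EL_V[OF assms] by auto
  have "raag_step VL EL ([] @ [(u, True), (v, True)] @ []) ([] @ [(v, True), (u, True)] @ [])"
    using uv by (intro raag_stepI2 assms) auto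
  then have "([(u, True), (v, True)], [(v, True), (u, True)]) \<in> raag_rel VL EL"
    by (simp add: raag_rel_step)
  then show ?thesis using uv by (simp add: raag_mult_cls cls_eq_iff)
qed

lemma eG_Phi:
  assumes "P \<in> carrier AL"
  shows "exc (\<Phi> P) s = (\<Sum>x\<in>fib s. exc P x)"
proof -
  obtain x where x: "x \<in> raag_words VL" "P = cls VL EL x" using assms by (elim carrier_raagE)
  have "mapw \<phi> x \<in> raag_words VG" using x(1) phi_img by (intro mapw_words) auto
  then show ?thesis using x by (simp add: raag_hom_cls[OF sm_phi] exc_cls ex_mapw[OF finL])
qed

lemma K2:
  assumes F: "F \<in> FAutS" and fIA: "pp F \<in> IA AG" and u: "u \<in> VL"
  shows "\<forall>s\<in>VG. (\<Sum>x\<in>fib s. exc (F (gen u)) x) = (if s = \<phi> u then 1 else 0)"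
proof
  fix s assume s: "s \<in> VG"
  have Fg: "F (gen u) \<in> carrier AL" using group.auto_closed[OF grpL FAut_auto[OF F] gen_mem[OF u]] .
  have "(\<Sum>x\<in>fib s. exc (F (gen u)) x) = exc (\<Phi> (F (gen u))) s" using eG_Phi[OF Fg] by simp
  also have "\<Phi> (F (gen u)) = pp F (\<Phi> (gen u))" using p_spec[OF F] gen_mem[OF u] by (simp add: is_lift_def)
  also have "exc (pp F (\<Phi> (gen u))) = exc (\<Phi> (gen u))"
    using exc_IA[OF fIA Phi_closed[OF gen_mem[OF u]]] .
  also have "\<Phi> (gen u) = cls VG EG [(\<phi> u, True)]" using u by (simp add: raag_hom_cls[OF sm_phi])
  also have "exc (cls VG EG [(\<phi> u, True)]) s = (if s = \<phi> u then 1 else 0)"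
    using u phi_img by (auto simp: exc_cls)
  finally show "(\<Sum>x\<in>fib s. exc (F (gen u)) x) = (if s = \<phi> u then 1 else 0)" .
qed

lemma K3:
  assumes F: "F \<in> auto AL" and uv: "EL u v"
  shows "\<forall>x\<in>VL. \<forall>y\<in>VL. x \<noteq> y \<longrightarrow> \<not> EL x y \<longrightarrow>
           exc (F (gen u)) x * exc (F (gen v)) y = exc (F (gen u)) y * exc (F (gen v)) x"
proof (intro ballI impI)
  fix x y assume x: "x \<in> VL" and y: "y \<in> VL" and xy: "x \<noteq> y" and ne: "\<not> EL x y"
  have uv': "u \<in> VL" "v \<in> VL" using EL_V[OF uv] by auto
  have gu: "gen u \<in> carrier AL" and gv: "gen v \<in> carrier AL" using uv' gen_mem by auto
  have Fu: "F (gen u) \<in> carrier AL" and Fv: "F (gen v) \<in> carrier AL"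
    using group.auto_closed[OF grpL F] gu gv by auto
  have "F (gen u) \<otimes>\<^bsub>AL\<^esub> F (gen v) = F (gen u \<otimes>\<^bsub>AL\<^esub> gen v)"
    using group.auto_mult_hom[OF grpL F gu gv] by simp
  also have "\<dots> = F (gen v \<otimes>\<^bsub>AL\<^esub> gen u)" using gen_comm[OF uv] by simp
  also have "\<dots> = F (gen v) \<otimes>\<^bsub>AL\<^esub> F (gen u)" using group.auto_mult_hom[OF grpL F gv gu] by simp
  finally have c: "F (gen u) \<otimes>\<^bsub>AL\<^esub> F (gen v) = F (gen v) \<otimes>\<^bsub>AL\<^esub> F (gen u)" .
  have ne': "\<not> EL y x" using ne EL_sym by blast
  show "exc (F (gen u)) x * exc (F (gen v)) y = exc (F (gen u)) y * exc (F (gen v)) x"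
    using commute_ex[OF xy ne ne' Fu Fv c] by (simp add: mult.commute)
qed

lemma K5:
  assumes F: "F \<in> FAutS" and fIA: "pp F \<in> IA AG"
  shows "\<exists>\<mu>. (\<forall>u\<in>VL. \<mu> u \<in> VL \<and> \<phi> (\<mu> u) = \<phi> u \<and> exc (F (gen u)) = (\<lambda>z. if z = \<mu> u then 1 else 0))
            \<and> (\<forall>u v. EL u v \<longrightarrow> EL (\<mu> u) (\<mu> v))"
proof -
  have Fa: "F \<in> auto AL" using FAut_auto[OF F] .
  have ex: "\<exists>w. w \<in> VL \<and> \<phi> w = \<phi> u \<and> exc (F (gen u)) = (\<lambda>z. if z = w then 1 else 0)" if u: "u \<in> VL" for u
  proof -
    have "\<exists>v. EL u v" using niL u unfolding no_isolated_vertices_def by blast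
    then obtain v where uv: "EL u v" by blast
    have v: "v \<in> VL" using EL_V[OF uv] by simp
    have Fgu: "F (gen u) \<in> carrier AL" using group.auto_closed[OF grpL Fa gen_mem[OF u]] .
    have out: "\<forall>z. z \<notin> VL \<longrightarrow> exc (F (gen u)) z = 0"
      using exc_outside[OF Fgu] by blast
    from key_comb[OF uv K2[OF F fIA u] K2[OF F fIA v] K3[OF Fa uv] out]
    show ?thesis by blast
  qed
  then have "\<forall>u\<in>VL. \<exists>w. w \<in> VL \<and> \<phi> w = \<phi> u \<and> exc (F (gen u)) = (\<lambda>z. if z = w then 1 else 0)"
    by blast
  from bchoice[OF this] obtain \<mu> where
    mu: "\<forall>u\<in>VL. \<mu> u \<in> VL \<and> \<phi> (\<mu> u) = \<phi> u \<and> exc (F (gen u)) = (\<lambda>z. if z = \<mu> u then 1 else 0)"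
    by blast
  have "EL (\<mu> u) (\<mu> v)" if uv: "EL u v" for u v
  proof (rule ccontr)
    assume ne: "\<not> EL (\<mu> u) (\<mu> v)"
    have u: "u \<in> VL" and v: "v \<in> VL" using EL_V[OF uv] by auto
    have mu_u: "\<mu> u \<in> VL" "\<phi> (\<mu> u) = \<phi> u" using mu u by auto
    have mu_v: "\<mu> v \<in> VL" "\<phi> (\<mu> v) = \<phi> v" using mu v by auto
    have neq: "\<mu> u \<noteq> \<mu> v" using mu_u mu_v phi_edge_neq[OF uv] by auto
    have "exc (F (gen u)) (\<mu> u) * exc (F (gen v)) (\<mu> v) = exc (F (gen u)) (\<mu> v) * exc (F (gen v)) (\<mu> u)"
      using K3[OF Fa uv, rule_format, OF mu_u(1) mu_v(1) neq ne] .
    then show False using mu u v neq by simp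
  qed
  then show ?thesis using mu by blast
qed

lemma K6:
  assumes G: "G \<in> auto AL" and sig: "\<forall>u\<in>VL. exc (G (gen u)) = (\<lambda>z. if z = \<sigma> u then 1 else 0)"
    and P: "P \<in> carrier AL"
  shows "exc (G P) w = (\<Sum>u\<in>{u\<in>VL. \<sigma> u = w}. exc P u)"
proof -
  interpret gh: group_hom AL AL G
    using group.auto_hom[OF grpL G] grpL by (simp add: group_hom_def group_hom_axioms_def)
  obtain x where x: "x \<in> raag_words VL" "P = cls VL EL x" using P by (elim carrier_raagE)
  have "exc (G (cls VL EL x)) w = (\<Sum>u\<in>{u\<in>VL. \<sigma> u = w}. ex x u)" using x(1)
  proof (induction x rule: ex.induct)
    case 1
    then show ?case by (simp add: raag_one[symmetric] exc_one)
  next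
    case (2 v b x')
    have v: "v \<in> VL" and x': "x' \<in> raag_words VL" using "2.prems" by auto
    have lw: "[(v, b)] \<in> raag_words VL" using v by simp
    have split: "cls VL EL ((v, b) # x') = cls VL EL [(v, b)] \<otimes>\<^bsub>AL\<^esub> cls VL EL x'"
      using lw x' by (simp add: raag_mult_cls)
    have gl: "exc (G (cls VL EL [(v, b)])) = (\<lambda>z. (if b then 1 else -1) * (if z = \<sigma> v then 1 else 0))"
    proof (cases b)
      case True
      then show ?thesis using sig v by (simp add: fun_eq_iff)
    next
      case False
      have "cls VL EL [(v, False)] = inv\<^bsub>AL\<^esub> gen v"
        using raag_inv_cls[of "[(v, True)]" VL EL] v by (simp add: winv_def)
      then have "G (cls VL EL [(v, False)]) = inv\<^bsub>AL\<^esub> G (gen v)" using gen_mem[OF v] by simp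
      moreover have "exc (inv\<^bsub>AL\<^esub> G (gen v)) = - exc (G (gen v))"
        using exc_inv gh.hom_closed[OF gen_mem[OF v]] by blast
      ultimately show ?thesis using False sig v by (simp add: fun_eq_iff)
    qed
    have "exc (G (cls VL EL ((v, b) # x'))) w =
          exc (G (cls VL EL [(v, b)])) w + exc (G (cls VL EL x')) w"
      using split lw x' cls_mem exc_mult gh.hom_closed by (simp add: cls_mem exc_mult)
    also have "\<dots> = (if b then 1 else -1) * (if w = \<sigma> v then 1 else 0) + (\<Sum>u\<in>{u\<in>VL. \<sigma> u = w}. ex x' u)"
      using gl "2.IH"[OF x'] by simp
    also have "(if b then 1 else -1) * (if w = \<sigma> v then 1 else 0) =
        (\<Sum>u\<in>{u\<in>VL. \<sigma> u = w}. (if u = v then (if b then 1 else -1) else 0 :: int))"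
      using v finL by (simp add: sum.delta')
    finally show ?case by (simp add: sum.distrib)
  qed
  then show ?thesis using x by (simp add: exc_cls)
qed

end


context cov
begin

abbreviation "deck \<equiv> deck_graph VL EL \<phi>"

lemma deck_props:
  assumes "\<mu> \<in> deck"
  shows "bij_betw \<mu> VL VL" "\<And>u v. u \<in> VL \<Longrightarrow> v \<in> VL \<Longrightarrow> EL (\<mu> u) (\<mu> v) \<longleftrightarrow> EL u v"
    "\<And>u. u \<in> VL \<Longrightarrow> \<phi> (\<mu> u) = \<phi> u"
  using assms by (auto simp: deck_graph_def graph_aut_def)

lemma deckI:
  assumes "bij_betw \<mu> VL VL" "\<And>u v. u \<in> VL \<Longrightarrow> v \<in> VL \<Longrightarrow> EL (\<mu> u) (\<mu> v) \<longleftrightarrow> EL u v"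
    "\<And>u. u \<in> VL \<Longrightarrow> \<phi> (\<mu> u) = \<phi> u"
  shows "\<mu> \<in> deck"
  using assms by (auto simp: deck_graph_def graph_aut_def)

lemma deck_in: "\<mu> \<in> deck \<Longrightarrow> u \<in> VL \<Longrightarrow> \<mu> u \<in> VL"
  using deck_props(1) bij_betwE by blast

lemma deck_sm: "\<mu> \<in> deck \<Longrightarrow> simp_map VL EL VL EL \<mu>"
  unfolding simp_map_def using deck_in deck_props(2) EL_V by blast

lemma deck_id: "(\<lambda>v. v) \<in> deck"
  by (rule deckI) (auto simp: bij_betw_def)

lemma deck_comp: "\<mu> \<in> deck \<Longrightarrow> \<nu> \<in> deck \<Longrightarrow> \<mu> \<circ> \<nu> \<in> deck"
  apply (rule deckI)
    apply (rule bij_betw_trans[OF deck_props(1) deck_props(1)], assumption, assumption)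
   apply (auto simp: deck_props deck_in)
  done

lemma deck_inv:
  assumes "\<mu> \<in> deck"
  shows "inv_into VL \<mu> \<in> deck" "\<And>u. u \<in> VL \<Longrightarrow> \<mu> (inv_into VL \<mu> u) = u"
    "\<And>u. u \<in> VL \<Longrightarrow> inv_into VL \<mu> (\<mu> u) = u" "\<And>u. u \<in> VL \<Longrightarrow> inv_into VL \<mu> u \<in> VL"
proof -
  have b: "bij_betw \<mu> VL VL" by (rule deck_props(1)[OF assms])
  show r: "\<And>u. u \<in> VL \<Longrightarrow> \<mu> (inv_into VL \<mu> u) = u" using b by (simp add: bij_betw_inv_into_right)
  show l: "\<And>u. u \<in> VL \<Longrightarrow> inv_into VL \<mu> (\<mu> u) = u" using b by (simp add: bij_betw_inv_into_left)
  show i: "\<And>u. u \<in> VL \<Longrightarrow> inv_into VL \<mu> u \<in> VL" using b by (meson bij_betwE bij_betw_inv_into)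
  show "inv_into VL \<mu> \<in> deck"
  proof (rule deckI)
    show "bij_betw (inv_into VL \<mu>) VL VL" using b by (rule bij_betw_inv_into)
    fix u v assume u: "u \<in> VL" and v: "v \<in> VL"
    have "EL (\<mu> (inv_into VL \<mu> u)) (\<mu> (inv_into VL \<mu> v)) \<longleftrightarrow> EL (inv_into VL \<mu> u) (inv_into VL \<mu> v)"
      using deck_props(2)[OF assms] i u v by blast
    then show "EL (inv_into VL \<mu> u) (inv_into VL \<mu> v) \<longleftrightarrow> EL u v" using r u v by simp
  next
    fix u assume u: "u \<in> VL"
    have "\<phi> (\<mu> (inv_into VL \<mu> u)) = \<phi> (inv_into VL \<mu> u)" using deck_props(3)[OF assms] i u by blast
    then show "\<phi> (inv_into VL \<mu> u) = \<phi> u" using r u by simp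
  qed
qed

lemma RH_comp_apply:
  "\<mu> \<in> deck \<Longrightarrow> \<nu> \<in> deck \<Longrightarrow> P \<in> carrier AL \<Longrightarrow> RH \<mu> (RH \<nu> P) = RH (\<mu> \<circ> \<nu>) P"
  using raag_hom_comp deck_sm by blast

lemma RH_idish: "(\<And>v. v \<in> VL \<Longrightarrow> \<sigma> v = v) \<Longrightarrow> RH \<sigma> = (\<lambda>P\<in>carrier AL. P)"
  by (rule raag_hom_id)

lemma RH_closed: "\<mu> \<in> deck \<Longrightarrow> P \<in> carrier AL \<Longrightarrow> RH \<mu> P \<in> carrier AL"
  using raag_hom_mem deck_sm by blast

lemma RH_auto:
  assumes mu: "\<mu> \<in> deck"
  shows "RH \<mu> \<in> auto AL"
proof -
  define \<mu>' where "\<mu>' = inv_into VL \<mu>"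
  have mu': "\<mu>' \<in> deck" using deck_inv(1)[OF mu] by (simp add: \<mu>'_def)
  have 1: "RH \<mu>' (RH \<mu> P) = P" if "P \<in> carrier AL" for P
  proof -
    have "RH \<mu>' (RH \<mu> P) = RH (\<mu>' \<circ> \<mu>) P" using RH_comp_apply[OF mu' mu that] .
    also have "RH (\<mu>' \<circ> \<mu>) = (\<lambda>P\<in>carrier AL. P)" using deck_inv(3)[OF mu] by (intro RH_idish) (simp add: \<mu>'_def)
    finally show ?thesis using that by simp
  qed
  have 2: "RH \<mu> (RH \<mu>' P) = P" if "P \<in> carrier AL" for P
  proof -
    have "RH \<mu> (RH \<mu>' P) = RH (\<mu> \<circ> \<mu>') P" using RH_comp_apply[OF mu mu' that] .
    also have "RH (\<mu> \<circ> \<mu>') = (\<lambda>P\<in>carrier AL. P)" using deck_inv(2)[OF mu] by (intro RH_idish) (simp add: \<mu>'_def)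
    finally show ?thesis using that by simp
  qed
  have "bij_betw (RH \<mu>) (carrier AL) (carrier AL)"
    by (rule bij_betw_byWitness[where f'="RH \<mu>'"]) (use 1 2 RH_closed mu mu' in auto)
  then show ?thesis
    using raag_hom_hom[OF deck_sm[OF mu]] raag_hom_ext by (simp add: auto_def Bij_def)
qed

lemma RH_mult:
  assumes "\<mu> \<in> deck" "\<nu> \<in> deck"
  shows "RH \<mu> \<otimes>\<^bsub>AutoGroup AL\<^esub> RH \<nu> = RH (\<mu> \<circ> \<nu>)"
proof (rule group.auto_eqI[OF grpL])
  show "RH \<mu> \<otimes>\<^bsub>AutoGroup AL\<^esub> RH \<nu> \<in> auto AL"
    using group.auto_m_closed[OF grpL] RH_auto assms by blast
  show "RH (\<mu> \<circ> \<nu>) \<in> auto AL" using RH_auto deck_comp assms by blast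
  fix P assume "P \<in> carrier AL"
  then show "(RH \<mu> \<otimes>\<^bsub>AutoGroup AL\<^esub> RH \<nu>) P = RH (\<mu> \<circ> \<nu>) P"
    using group.auto_mult_apply[OF grpL RH_auto[OF assms(1)] RH_auto[OF assms(2)]] RH_comp_apply assms
    by simp
qed

lemma Deck_alt: "DeckS = RH ` deck"
  by (auto simp: Deck_def)

lemma Deck_sub: "subgroup DeckS (AutoGroup AL)"
proof (rule group.subgroupI[OF group.AutoGroup[OF grpL]])
  show "DeckS \<subseteq> carrier (AutoGroup AL)" using RH_auto by (auto simp: Deck_alt)
  show "DeckS \<noteq> {}" using deck_id by (auto simp: Deck_alt)
next
  fix D assume "D \<in> DeckS"
  then obtain \<mu> where mu: "\<mu> \<in> deck" "D = RH \<mu>" by (auto simp: Deck_alt)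
  define \<mu>' where "\<mu>' = inv_into VL \<mu>"
  have mu': "\<mu>' \<in> deck" using deck_inv(1)[OF mu(1)] by (simp add: \<mu>'_def)
  have "RH \<mu>' \<otimes>\<^bsub>AutoGroup AL\<^esub> RH \<mu> = RH (\<mu>' \<circ> \<mu>)" by (rule RH_mult[OF mu' mu(1)])
  also have "\<dots> = \<one>\<^bsub>AutoGroup AL\<^esub>"
    using deck_inv(3)[OF mu(1)] by (simp add: group.auto_one[OF grpL] RH_idish \<mu>'_def)
  finally have "inv\<^bsub>AutoGroup AL\<^esub> RH \<mu> = RH \<mu>'"
    using group.inv_equality[OF group.AutoGroup[OF grpL]] RH_auto mu mu' by simp
  then show "inv\<^bsub>AutoGroup AL\<^esub> D \<in> DeckS" using mu mu' by (simp add: Deck_alt)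
next
  fix D D' assume "D \<in> DeckS" "D' \<in> DeckS"
  then obtain \<mu> \<nu> where "\<mu> \<in> deck" "\<nu> \<in> deck" "D = RH \<mu>" "D' = RH \<nu>" by (auto simp: Deck_alt)
  then show "D \<otimes>\<^bsub>AutoGroup AL\<^esub> D' \<in> DeckS" using RH_mult deck_comp by (simp add: Deck_alt)
qed

lemma Deck_FD: "DeckS \<subseteq> FDS"
proof
  fix D assume "D \<in> DeckS"
  then obtain \<mu> where mu: "\<mu> \<in> deck" "D = RH \<mu>" by (auto simp: Deck_alt)
  have "lift (\<one>\<^bsub>AutoGroup AG\<^esub>) (RH \<mu>)"
    unfolding is_lift_def
  proof
    fix x assume x: "x \<in> carrier AL"
    have "\<Phi> (RH \<mu> x) = raag_hom VL EL VG EG (\<phi> \<circ> \<mu>) x"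
      using raag_hom_comp[OF deck_sm[OF mu(1)] sm_phi x] .
    also have "raag_hom VL EL VG EG (\<phi> \<circ> \<mu>) = \<Phi>"
      using deck_props(3)[OF mu(1)] by (intro raag_hom_cong) simp
    finally show "\<one>\<^bsub>AutoGroup AG\<^esub> (\<Phi> x) = \<Phi> (RH \<mu> x)"
      using Phi_closed[OF x] by (simp add: group.auto_one[OF grpG])
  qed
  then show "D \<in> FDS" using mu RH_auto by (simp add: FD_alt)
qed

lemma RH_gen: "\<mu> \<in> deck \<Longrightarrow> u \<in> VL \<Longrightarrow> RH \<mu> (gen u) = gen (\<mu> u)"
  by (simp add: raag_hom_cls[OF deck_sm])

lemma exc_RH:
  assumes "\<mu> \<in> deck" "P \<in> carrier AL"
  shows "exc (RH \<mu> P) w = (\<Sum>u\<in>{u\<in>VL. \<mu> u = w}. exc P u)"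
proof (rule K6[OF RH_auto[OF assms(1)] _ assms(2)])
  show "\<forall>u\<in>VL. exc (RH \<mu> (gen u)) = (\<lambda>z. if z = \<mu> u then 1 else 0)"
    using RH_gen[OF assms(1)] exc_gen deck_in[OF assms(1)] by simp
qed

lemma IA_sub_G: "subgroup (IA AG) (AutoGroup AG)"
  using group.IA_normal[OF grpG] normal_imp_subgroup by blast

lemma IA_sub_L: "subgroup (IA AL) (AutoGroup AL)"
  using group.IA_normal[OF grpL] normal_imp_subgroup by blast

lemma K7:
  assumes F: "F \<in> FAutS" and fIA: "pp F \<in> IA AG"
  shows "\<exists>D\<in>DeckS. F \<otimes>\<^bsub>AutoGroup AL\<^esub> inv\<^bsub>AutoGroup AL\<^esub> D \<in> IA AL"
proof -
  define F' where "F' = inv\<^bsub>AutoGroup AL\<^esub> F"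
  have Fa: "F \<in> auto AL" using FAut_auto[OF F] .
  have F'F: "F' \<in> FAutS" using subgroup.m_inv_closed[OF FAut_sub F] by (simp add: F'_def)
  have F'a: "F' \<in> auto AL" using FAut_auto[OF F'F] .
  have fIA': "pp F' \<in> IA AG"
    using p_inv[OF F] subgroup.m_inv_closed[OF IA_sub_G fIA] by (simp add: F'_def)
  obtain \<mu> where mu: "\<forall>u\<in>VL. \<mu> u \<in> VL \<and> \<phi> (\<mu> u) = \<phi> u \<and> exc (F (gen u)) = (\<lambda>z. if z = \<mu> u then 1 else 0)"
    and mue: "\<forall>u v. EL u v \<longrightarrow> EL (\<mu> u) (\<mu> v)"
    using K5[OF F fIA] by blast
  obtain \<nu> where nu: "\<forall>u\<in>VL. \<nu> u \<in> VL \<and> \<phi> (\<nu> u) = \<phi> u \<and> exc (F' (gen u)) = (\<lambda>z. if z = \<nu> u then 1 else 0)"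
    and nue: "\<forall>u v. EL u v \<longrightarrow> EL (\<nu> u) (\<nu> v)"
    using K5[OF F'F fIA'] by blast
  have linF: "exc (F P) w = (\<Sum>u\<in>{u\<in>VL. \<mu> u = w}. exc P u)" if "P \<in> carrier AL" for P w
    using K6[OF Fa _ that] mu by blast
  have linF': "exc (F' P) w = (\<Sum>u\<in>{u\<in>VL. \<nu> u = w}. exc P u)" if "P \<in> carrier AL" for P w
    using K6[OF F'a _ that] nu by blast
  have mn: "\<mu> (\<nu> w) = w" if w: "w \<in> VL" for w
  proof -
    have gw: "gen w \<in> carrier AL" using gen_mem[OF w] .
    have "F (F' (gen w)) = gen w" using group.auto_inv_apply1[OF grpL Fa gw] by (simp add: F'_def)
    then have "exc (gen w) (\<mu> (\<nu> w)) = (\<Sum>u\<in>{u\<in>VL. \<mu> u = \<mu> (\<nu> w)}. exc (F' (gen w)) u)"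
      using linF[OF group.auto_closed[OF grpL F'a gw]] by simp
    also have "\<dots> = (\<Sum>u\<in>{u\<in>VL. \<mu> u = \<mu> (\<nu> w)}. (if u = \<nu> w then 1 else 0))"
      using nu w by simp
    also have "\<dots> = 1" using nu w finL by (simp add: sum.delta)
    finally show ?thesis using exc_gen[OF w] by (simp split: if_splits)
  qed
  have nm: "\<nu> (\<mu> w) = w" if w: "w \<in> VL" for w
  proof -
    have gw: "gen w \<in> carrier AL" using gen_mem[OF w] .
    have "F' (F (gen w)) = gen w" using group.auto_inv_apply2[OF grpL Fa gw] by (simp add: F'_def)
    then have "exc (gen w) (\<nu> (\<mu> w)) = (\<Sum>u\<in>{u\<in>VL. \<nu> u = \<nu> (\<mu> w)}. exc (F (gen w)) u)"
      using linF'[OF group.auto_closed[OF grpL Fa gw]] by simp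
    also have "\<dots> = (\<Sum>u\<in>{u\<in>VL. \<nu> u = \<nu> (\<mu> w)}. (if u = \<mu> w then 1 else 0))"
      using mu w by simp
    also have "\<dots> = 1" using mu w finL by (simp add: sum.delta)
    finally show ?thesis using exc_gen[OF w] by (simp split: if_splits)
  qed
  have mudeck: "\<mu> \<in> deck"
  proof (rule deckI)
    show "bij_betw \<mu> VL VL"
      by (rule bij_betw_byWitness[where f'=\<nu>]) (use mu nu mn nm in auto)
  next
    fix u v assume u: "u \<in> VL" and v: "v \<in> VL"
    show "EL (\<mu> u) (\<mu> v) \<longleftrightarrow> EL u v"
    proof
      assume "EL (\<mu> u) (\<mu> v)"
      then have "EL (\<nu> (\<mu> u)) (\<nu> (\<mu> v))" using nue by blast
      then show "EL u v" using nm u v by simp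
    qed (use mue in blast)
  next
    fix u assume "u \<in> VL"
    then show "\<phi> (\<mu> u) = \<phi> u" using mu by blast
  qed
  define D where "D = RH \<mu>"
  have DD: "D \<in> DeckS" using mudeck by (simp add: Deck_alt D_def)
  have Da: "D \<in> auto AL" using RH_auto[OF mudeck] by (simp add: D_def)
  have "F \<otimes>\<^bsub>AutoGroup AL\<^esub> inv\<^bsub>AutoGroup AL\<^esub> D \<in> IA AL"
  proof (rule IA_exc)
    have Dia: "inv\<^bsub>AutoGroup AL\<^esub> D \<in> auto AL" using group.auto_inv_closed[OF grpL Da] .
    show "F \<otimes>\<^bsub>AutoGroup AL\<^esub> inv\<^bsub>AutoGroup AL\<^esub> D \<in> auto AL"
      using group.auto_m_closed[OF grpL Fa Dia] .
    fix z assume z: "z \<in> carrier AL"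
    define Q where "Q = (inv\<^bsub>AutoGroup AL\<^esub> D) z"
    have Q: "Q \<in> carrier AL" using group.auto_closed[OF grpL Dia z] by (simp add: Q_def)
    have DQ: "D Q = z" using group.auto_inv_apply1[OF grpL Da z] by (simp add: Q_def)
    have "(F \<otimes>\<^bsub>AutoGroup AL\<^esub> inv\<^bsub>AutoGroup AL\<^esub> D) z = F Q"
      using group.auto_mult_apply[OF grpL Fa Dia z] by (simp add: Q_def)
    moreover have "exc (F Q) = exc (D Q)"
    proof
      fix w show "exc (F Q) w = exc (D Q) w"
        using linF[OF Q] exc_RH[OF mudeck Q] by (simp add: D_def)
    qed
    ultimately show "exc ((F \<otimes>\<^bsub>AutoGroup AL\<^esub> inv\<^bsub>AutoGroup AL\<^esub> D) z) = exc z" using DQ by simp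
  qed
  then show ?thesis using DD by blast
qed

lemma K8:
  assumes D1: "D1 \<in> DeckS" and D2: "D2 \<in> DeckS"
    and ia: "D1 \<otimes>\<^bsub>AutoGroup AL\<^esub> inv\<^bsub>AutoGroup AL\<^esub> D2 \<in> IA AL"
  shows "D1 = D2"
proof -
  obtain \<mu>1 where m1: "\<mu>1 \<in> deck" "D1 = RH \<mu>1" using D1 by (auto simp: Deck_alt)
  obtain \<mu>2 where m2: "\<mu>2 \<in> deck" "D2 = RH \<mu>2" using D2 by (auto simp: Deck_alt)
  have a1: "D1 \<in> auto AL" and a2: "D2 \<in> auto AL" using RH_auto m1 m2 by auto
  have ai: "inv\<^bsub>AutoGroup AL\<^esub> D2 \<in> auto AL" using group.auto_inv_closed[OF grpL a2] .
  have "\<mu>1 w = \<mu>2 w" if w: "w \<in> VL" for w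
  proof -
    have gw: "gen w \<in> carrier AL" using gen_mem[OF w] .
    have z: "D2 (gen w) \<in> carrier AL" using group.auto_closed[OF grpL a2 gw] .
    have "(D1 \<otimes>\<^bsub>AutoGroup AL\<^esub> inv\<^bsub>AutoGroup AL\<^esub> D2) (D2 (gen w)) = D1 (gen w)"
      using group.auto_mult_apply[OF grpL a1 ai z] group.auto_inv_apply2[OF grpL a2 gw] by simp
    then have "exc (D1 (gen w)) = exc (D2 (gen w))" using exc_IA[OF ia z] by simp
    then have "exc (gen (\<mu>1 w)) = exc (gen (\<mu>2 w))" using m1 m2 w by (simp add: RH_gen)
    then have "(\<lambda>z. if z = \<mu>1 w then 1 else 0 :: int) = (\<lambda>z. if z = \<mu>2 w then 1 else 0)"
      using exc_gen deck_in m1 m2 w by simp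
    then show ?thesis by (metis zero_neq_one)
  qed
  then have "RH \<mu>1 = RH \<mu>2" by (intro raag_hom_cong) simp
  then show ?thesis using m1 m2 by simp
qed

end


context cov
begin

abbreviation "FDG \<equiv> (AutoGroup AL)\<lparr>carrier := FDS\<rparr>"
abbreviation "FAutG \<equiv> (AutoGroup AL)\<lparr>carrier := FAutS\<rparr>"
abbreviation "LAutG \<equiv> (AutoGroup AG)\<lparr>carrier := LAutS\<rparr>"
abbreviation "DeckG \<equiv> (AutoGroup AL)\<lparr>carrier := DeckS\<rparr>"
abbreviation "NL \<equiv> FAutS \<inter> IA AL"
abbreviation "NG \<equiv> LAutS \<inter> IA AG"
abbreviation "i2 \<equiv> (\<lambda>\<mu>. NL #>\<^bsub>FAutG\<^esub> \<mu>)"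
abbreviation "qq \<equiv> (\<lambda>C. NG #>\<^bsub>LAutG\<^esub> pp (SOME F. F \<in> C))"

lemma AGL: "group (AutoGroup AL)" by (rule group.AutoGroup[OF grpL])
lemma AGG: "group (AutoGroup AG)" by (rule group.AutoGroup[OF grpG])

lemma grp_FDG: "group FDG" by (rule group.subgroup_imp_group[OF AGL FD_sub])
lemma grp_FAutG: "group FAutG" by (rule group.subgroup_imp_group[OF AGL FAut_sub])
lemma grp_LAutG: "group LAutG" by (rule group.subgroup_imp_group[OF AGG LAut_sub])
lemma grp_DeckG: "group DeckG" by (rule group.subgroup_imp_group[OF AGL Deck_sub])

lemma NL_normal: "NL \<lhd> FAutG"
  using group.normal_Int_subgroup[OF AGL FAut_sub group.IA_normal[OF grpL]] by (simp add: Int_commute)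

lemma NG_normal: "NG \<lhd> LAutG"
  using group.normal_Int_subgroup[OF AGG LAut_sub group.IA_normal[OF grpG]] by (simp add: Int_commute)

lemma NL_sub: "subgroup NL FAutG" using NL_normal normal_imp_subgroup by blast
lemma NG_sub: "subgroup NG LAutG" using NG_normal normal_imp_subgroup by blast

lemma FAutG_inv: "F \<in> FAutS \<Longrightarrow> inv\<^bsub>FAutG\<^esub> F = inv\<^bsub>AutoGroup AL\<^esub> F"
  using group.m_inv_consistent[OF AGL FAut_sub] by blast

lemma LAutG_inv: "f \<in> LAutS \<Longrightarrow> inv\<^bsub>LAutG\<^esub> f = inv\<^bsub>AutoGroup AG\<^esub> f"
  using group.m_inv_consistent[OF AGG LAut_sub] by blast

lemma mon_FD: "(\<lambda>F. F) \<in> mon FDG FAutG"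
  unfolding mon_def using FD_sub_FAut by (auto intro!: homI)

lemma p_hom: "pp \<in> hom FAutG LAutG"
  using p_LAut p_mult by (auto intro!: homI)

lemma kernel_p: "kernel FAutG LAutG pp = (\<lambda>F. F) ` FDS"
  using p_one_iff FD_sub_FAut by (auto simp: kernel_def)

lemma epi_p: "pp \<in> epi FAutG LAutG"
  using p_hom p_surj by (simp add: epi_def)

lemma cosL_mem: "F \<in> FAutS \<Longrightarrow> NL #>\<^bsub>FAutG\<^esub> F \<in> carrier (FAutG Mod NL)"
proof -
  assume F: "F \<in> FAutS"
  have "NL #>\<^bsub>FAutG\<^esub> F \<in> rcosets\<^bsub>FAutG\<^esub> NL"
    by (rule group.rcosetsI[OF grp_FAutG subgroup.subset[OF NL_sub]]) (use F in simp)
  then show ?thesis unfolding FactGroup_def by (simp only: partial_object.select_convs)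
qed

lemma cosG_mem: "f \<in> LAutS \<Longrightarrow> NG #>\<^bsub>LAutG\<^esub> f \<in> carrier (LAutG Mod NG)"
proof -
  assume f: "f \<in> LAutS"
  have "NG #>\<^bsub>LAutG\<^esub> f \<in> rcosets\<^bsub>LAutG\<^esub> NG"
    by (rule group.rcosetsI[OF grp_LAutG subgroup.subset[OF NG_sub]]) (use f in simp)
  then show ?thesis unfolding FactGroup_def by (simp only: partial_object.select_convs)
qed

lemma i2_mem: "D \<in> DeckS \<Longrightarrow> i2 D \<in> carrier (FAutG Mod NL)"
  using Deck_FD FD_sub_FAut cosL_mem by blast

lemma mon_i2: "i2 \<in> mon DeckG (FAutG Mod NL)"
  unfolding mon_def
proof (intro CollectI conjI homI)
  fix D assume "D \<in> carrier DeckG"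
  then show "i2 D \<in> carrier (FAutG Mod NL)" using i2_mem by simp
next
  fix D1 D2 assume "D1 \<in> carrier DeckG" "D2 \<in> carrier DeckG"
  then have "D1 \<in> FAutS" "D2 \<in> FAutS" using Deck_FD FD_sub_FAut by auto
  then show "i2 (D1 \<otimes>\<^bsub>DeckG\<^esub> D2) = i2 D1 \<otimes>\<^bsub>FAutG Mod NL\<^esub> i2 D2"
    using normal.rcos_sum[OF NL_normal] by (simp add: FactGroup_def)
next
  show "inj_on i2 (carrier DeckG)"
  proof (rule inj_onI)
    fix D1 D2 assume D1: "D1 \<in> carrier DeckG" and D2: "D2 \<in> carrier DeckG" and eq: "i2 D1 = i2 D2"
    have F1: "D1 \<in> FAutS" and F2: "D2 \<in> FAutS" using D1 D2 Deck_FD FD_sub_FAut by auto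
    have "NL #>\<^bsub>FAutG\<^esub> (D1 \<otimes>\<^bsub>FAutG\<^esub> inv\<^bsub>FAutG\<^esub> D2) = NL"
      using group.coset_mult_inv2[OF grp_FAutG eq] F1 F2 subgroup.subset[OF NL_sub] by simp
    then have "D1 \<otimes>\<^bsub>FAutG\<^esub> inv\<^bsub>FAutG\<^esub> D2 \<in> NL"
      using group.coset_join1[OF grp_FAutG _ _ NL_sub] F1 F2 group.inv_closed[OF grp_FAutG]
        monoid.m_closed[OF group.is_monoid[OF grp_FAutG]] by simp
    then have "D1 \<otimes>\<^bsub>AutoGroup AL\<^esub> inv\<^bsub>AutoGroup AL\<^esub> D2 \<in> IA AL" using FAutG_inv[OF F2] by simp
    then show "D1 = D2" using K8 D1 D2 by simp
  qed
qed

lemma q_coset: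
  assumes F: "F \<in> FAutS"
  shows "qq (NL #>\<^bsub>FAutG\<^esub> F) = NG #>\<^bsub>LAutG\<^esub> pp F"
proof -
  have ex: "\<exists>G. G \<in> NL #>\<^bsub>FAutG\<^esub> F" using group.rcos_self[OF grp_FAutG _ NL_sub] F by auto
  define G where "G = (SOME G. G \<in> NL #>\<^bsub>FAutG\<^esub> F)"
  have "G \<in> NL #>\<^bsub>FAutG\<^esub> F" unfolding G_def using ex by (rule someI_ex)
  then obtain n where n: "n \<in> NL" and Gn: "G = n \<otimes>\<^bsub>AutoGroup AL\<^esub> F" by (auto simp: r_coset_def)
  have nF: "n \<in> FAutS" using n by simp
  have "pp G = pp n \<otimes>\<^bsub>AutoGroup AG\<^esub> pp F" using p_mult[OF nF F] Gn by simp
  moreover have pn: "pp n \<in> NG" using p_IA p_LAut n by auto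
  ultimately have "pp G \<in> NG #>\<^bsub>LAutG\<^esub> pp F"
    using group.rcosI[OF grp_LAutG pn subgroup.subset[OF NG_sub]] p_LAut[OF F] by simp
  then have "NG #>\<^bsub>LAutG\<^esub> pp F = NG #>\<^bsub>LAutG\<^esub> pp G"
    using group.repr_independence[OF grp_LAutG _ _ NG_sub] p_LAut[OF F] by simp
  then show ?thesis by (simp add: G_def)
qed

lemma rcosets_FAut: "C \<in> carrier (FAutG Mod NL) \<Longrightarrow> \<exists>F\<in>FAutS. C = NL #>\<^bsub>FAutG\<^esub> F"
  by (auto simp: FactGroup_def RCOSETS_def)

lemma rcosets_LAut: "Q \<in> carrier (LAutG Mod NG) \<Longrightarrow> \<exists>f\<in>LAutS. Q = NG #>\<^bsub>LAutG\<^esub> f"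
  by (auto simp: FactGroup_def RCOSETS_def)

lemma epi_q: "qq \<in> epi (FAutG Mod NL) (LAutG Mod NG)"
  unfolding epi_def
proof (intro CollectI conjI homI)
  fix C assume "C \<in> carrier (FAutG Mod NL)"
  then obtain F where F: "F \<in> FAutS" "C = NL #>\<^bsub>FAutG\<^esub> F" by (rule rcosets_FAut[THEN bexE])
  show "qq C \<in> carrier (LAutG Mod NG)"
    using q_coset[OF F(1)] F(2) cosG_mem[OF p_LAut[OF F(1)]] by simp
next
  fix C1 C2 assume C1: "C1 \<in> carrier (FAutG Mod NL)" and C2: "C2 \<in> carrier (FAutG Mod NL)"
  obtain F1 where F1: "F1 \<in> FAutS" "C1 = NL #>\<^bsub>FAutG\<^esub> F1" using rcosets_FAut[OF C1] by (rule bexE)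
  obtain F2 where F2: "F2 \<in> FAutS" "C2 = NL #>\<^bsub>FAutG\<^esub> F2" using rcosets_FAut[OF C2] by (rule bexE)
  note F = F1 F2
  have F12: "F1 \<otimes>\<^bsub>AutoGroup AL\<^esub> F2 \<in> FAutS" using subgroup.m_closed[OF FAut_sub F(1,3)] .
  have m1: "C1 \<otimes>\<^bsub>FAutG Mod NL\<^esub> C2 = C1 <#>\<^bsub>FAutG\<^esub> C2" by (simp add: FactGroup_def)
  have "(NL #>\<^bsub>FAutG\<^esub> F1) <#>\<^bsub>FAutG\<^esub> (NL #>\<^bsub>FAutG\<^esub> F2) = NL #>\<^bsub>FAutG\<^esub> (F1 \<otimes>\<^bsub>FAutG\<^esub> F2)"
    by (rule normal.rcos_sum[OF NL_normal]) (use F in simp_all)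
  then have c12: "C1 \<otimes>\<^bsub>FAutG Mod NL\<^esub> C2 = NL #>\<^bsub>FAutG\<^esub> (F1 \<otimes>\<^bsub>AutoGroup AL\<^esub> F2)"
    using m1 F(2,4) by simp
  have pF: "pp F1 \<in> LAutS" "pp F2 \<in> LAutS" using p_LAut F(1,3) by auto
  have "(NG #>\<^bsub>LAutG\<^esub> pp F1) <#>\<^bsub>LAutG\<^esub> (NG #>\<^bsub>LAutG\<^esub> pp F2) = NG #>\<^bsub>LAutG\<^esub> (pp F1 \<otimes>\<^bsub>LAutG\<^esub> pp F2)"
    by (rule normal.rcos_sum[OF NG_normal]) (use pF in simp_all)
  then have s12: "(NG #>\<^bsub>LAutG\<^esub> pp F1) <#>\<^bsub>LAutG\<^esub> (NG #>\<^bsub>LAutG\<^esub> pp F2) = NG #>\<^bsub>LAutG\<^esub> (pp F1 \<otimes>\<^bsub>AutoGroup AG\<^esub> pp F2)"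
    by simp
  have m2: "qq C1 \<otimes>\<^bsub>LAutG Mod NG\<^esub> qq C2 = qq C1 <#>\<^bsub>LAutG\<^esub> qq C2" by (simp add: FactGroup_def)
  have "qq (C1 \<otimes>\<^bsub>FAutG Mod NL\<^esub> C2) = NG #>\<^bsub>LAutG\<^esub> pp (F1 \<otimes>\<^bsub>AutoGroup AL\<^esub> F2)"
    using c12 q_coset[OF F12] by simp
  also have "\<dots> = NG #>\<^bsub>LAutG\<^esub> (pp F1 \<otimes>\<^bsub>AutoGroup AG\<^esub> pp F2)" using p_mult[OF F(1,3)] by simp
  also have "\<dots> = qq C1 <#>\<^bsub>LAutG\<^esub> qq C2" using s12 q_coset[OF F(1)] q_coset[OF F(3)] F(2,4) by simp
  finally show "qq (C1 \<otimes>\<^bsub>FAutG Mod NL\<^esub> C2) = qq C1 \<otimes>\<^bsub>LAutG Mod NG\<^esub> qq C2"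
    using m2 by simp
next
  show "qq ` carrier (FAutG Mod NL) = carrier (LAutG Mod NG)"
  proof
    show "qq ` carrier (FAutG Mod NL) \<subseteq> carrier (LAutG Mod NG)"
    proof
      fix Q assume "Q \<in> qq ` carrier (FAutG Mod NL)"
      then obtain C where C: "C \<in> carrier (FAutG Mod NL)" "Q = qq C" by (rule imageE)
      obtain F where F: "F \<in> FAutS" "C = NL #>\<^bsub>FAutG\<^esub> F" using rcosets_FAut[OF C(1)] by blast
      show "Q \<in> carrier (LAutG Mod NG)"
        using q_coset[OF F(1)] cosG_mem[OF p_LAut[OF F(1)]] C(2) F(2) by simp
    qed
  next
    show "carrier (LAutG Mod NG) \<subseteq> qq ` carrier (FAutG Mod NL)"
    proof
      fix Q assume "Q \<in> carrier (LAutG Mod NG)"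
      then obtain f where f: "f \<in> LAutS" "Q = NG #>\<^bsub>LAutG\<^esub> f" using rcosets_LAut by blast
      have "f \<in> pp ` FAutS" using p_surj f(1) by simp
      then obtain F where F: "F \<in> FAutS" "f = pp F" by (rule imageE)
      have m: "NL #>\<^bsub>FAutG\<^esub> F \<in> carrier (FAutG Mod NL)"
        using cosL_mem[OF F(1)] .
      have e: "qq (NL #>\<^bsub>FAutG\<^esub> F) = Q" using q_coset[OF F(1)] F f by simp
      show "Q \<in> qq ` carrier (FAutG Mod NL)"
        by (rule image_eqI[where f=qq and x="NL #>\<^bsub>FAutG\<^esub> F", OF e[symmetric] m])
    qed
  qed
qed

lemma kernel_q: "kernel (FAutG Mod NL) (LAutG Mod NG) qq = i2 ` DeckS"
proof
  show "kernel (FAutG Mod NL) (LAutG Mod NG) qq \<subseteq> i2 ` DeckS"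
  proof
    fix C assume C: "C \<in> kernel (FAutG Mod NL) (LAutG Mod NG) qq"
    then have Cc: "C \<in> carrier (FAutG Mod NL)" and qC: "qq C = NG" by (auto simp: kernel_def)
    obtain F where F: "F \<in> FAutS" "C = NL #>\<^bsub>FAutG\<^esub> F" using rcosets_FAut[OF Cc] by blast
    have "NG #>\<^bsub>LAutG\<^esub> pp F = NG" using qC q_coset[OF F(1)] F(2) by simp
    then have "pp F \<in> NG" using group.coset_join1[OF grp_LAutG _ _ NG_sub] p_LAut[OF F(1)] by simp
    then obtain D where D: "D \<in> DeckS" "F \<otimes>\<^bsub>AutoGroup AL\<^esub> inv\<^bsub>AutoGroup AL\<^esub> D \<in> IA AL"
      using K7[OF F(1)] by blast
    have DF: "D \<in> FAutS" using D(1) Deck_FD FD_sub_FAut by auto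
    have "F \<otimes>\<^bsub>FAutG\<^esub> inv\<^bsub>FAutG\<^esub> D \<in> FAutS"
      using subgroup.m_closed[OF FAut_sub F(1) subgroup.m_inv_closed[OF FAut_sub DF]] FAutG_inv[OF DF] by simp
    then have inNL: "F \<otimes>\<^bsub>FAutG\<^esub> inv\<^bsub>FAutG\<^esub> D \<in> NL" using D(2) FAutG_inv[OF DF] by simp
    have "NL #>\<^bsub>FAutG\<^esub> (F \<otimes>\<^bsub>FAutG\<^esub> inv\<^bsub>FAutG\<^esub> D) = NL"
      using group.coset_join2[OF grp_FAutG _ NL_sub inNL] inNL by simp
    then have "NL #>\<^bsub>FAutG\<^esub> F = NL #>\<^bsub>FAutG\<^esub> D"
      using group.coset_mult_inv1[OF grp_FAutG] F(1) DF subgroup.subset[OF NL_sub] by simp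
    then show "C \<in> i2 ` DeckS" using F(2) D(1) by blast
  qed
next
  show "i2 ` DeckS \<subseteq> kernel (FAutG Mod NL) (LAutG Mod NG) qq"
  proof
    fix C assume "C \<in> i2 ` DeckS"
    then obtain D where D: "D \<in> DeckS" "C = i2 D" by blast
    have DF: "D \<in> FAutS" and DFD: "D \<in> FDS" using D(1) Deck_FD FD_sub_FAut by auto
    have p1: "pp D = \<one>\<^bsub>AutoGroup AG\<^esub>" using p_one_iff[OF DF] DFD by simp
    have "NG #>\<^bsub>LAutG\<^esub> pp D = NG"
      using group.coset_mult_one[OF grp_LAutG] subgroup.subset[OF NG_sub] p1 by simp
    then have "qq C = NG" using q_coset[OF DF] D(2) by simp
    then show "C \<in> kernel (FAutG Mod NL) (LAutG Mod NG) qq"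
      using i2_mem[OF D(1)] D(2) by (simp add: kernel_def)
  qed
qed

lemma main:
  "group FDG \<and> group FAutG \<and> group LAutG \<and>
   (\<lambda>F. F) \<in> mon FDG FAutG \<and>
   kernel FAutG LAutG pp = (\<lambda>F. F) ` FDS \<and>
   pp \<in> epi FAutG LAutG \<and>
   group DeckG \<and> NL \<lhd> FAutG \<and> NG \<lhd> LAutG \<and>
   i2 \<in> mon DeckG (FAutG Mod NL) \<and>
   kernel (FAutG Mod NL) (LAutG Mod NG) qq = i2 ` DeckS \<and>
   qq \<in> epi (FAutG Mod NL) (LAutG Mod NG)"
  using grp_FDG grp_FAutG grp_LAutG mon_FD kernel_p epi_p grp_DeckG NL_normal NG_normal mon_i2 kernel_q epi_q
  by blast

end

theorem corollary7p4:
  fixes VL :: "'w set" and EL :: "'w \<Rightarrow> 'w \<Rightarrow> bool"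
    and VG :: "'v set" and EG :: "'v \<Rightarrow> 'v \<Rightarrow> bool"
    and \<phi> :: "'w \<Rightarrow> 'v"
  assumes "simple_graph VL EL" and "simple_graph VG EG"
    and "no_isolated_vertices VL EL" and "no_isolated_vertices VG EG"
    and "regular_covering VL EL VG EG \<phi>"
  defines "AL \<equiv> raag VL EL" and "AG \<equiv> raag VG EG"
  defines "FDG \<equiv> (AutoGroup AL)\<lparr>carrier := FD VL EL VG EG \<phi>\<rparr>"
    and "FAutG \<equiv> (AutoGroup AL)\<lparr>carrier := FAut VL EL VG EG \<phi>\<rparr>"
    and "LAutG \<equiv> (AutoGroup AG)\<lparr>carrier := LAut VL EL VG EG \<phi>\<rparr>"
    and "DeckG \<equiv> (AutoGroup AL)\<lparr>carrier := Deck VL EL \<phi>\<rparr>"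
  defines "p \<equiv> lifted_aut VL EL VG EG \<phi>"
    and "NL \<equiv> FAut VL EL VG EG \<phi> \<inter> IA AL"
    and "NG \<equiv> LAut VL EL VG EG \<phi> \<inter> IA AG"
  defines "i2 \<equiv> (\<lambda>\<mu>. NL #>\<^bsub>FAutG\<^esub> \<mu>)"
    and "q \<equiv> (\<lambda>C. NG #>\<^bsub>LAutG\<^esub> p (SOME F. F \<in> C))"
  shows "group FDG \<and> group FAutG \<and> group LAutG \<and>
         (\<lambda>F. F) \<in> mon FDG FAutG \<and>
         kernel FAutG LAutG p = (\<lambda>F. F) ` FD VL EL VG EG \<phi> \<and>
         p \<in> epi FAutG LAutG \<and>
         group DeckG \<and> NL \<lhd> FAutG \<and> NG \<lhd> LAutG \<and>
         i2 \<in> mon DeckG (FAutG Mod NL) \<and>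
         kernel (FAutG Mod NL) (LAutG Mod NG) q = i2 ` Deck VL EL \<phi> \<and>
         q \<in> epi (FAutG Mod NL) (LAutG Mod NG)"
proof -
  interpret cov VL EL VG EG \<phi>
    using assms(1,2,3,5) by (rule cov.intro)
  show ?thesis
    unfolding AL_def AG_def FDG_def FAutG_def LAutG_def DeckG_def p_def NL_def NG_def i2_def q_def
    by (rule main)
qed

end
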